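(* Let $R$ be a connected quotient root system with base $S$, let $\Phi\subseteq R^+$, and let $\Phi = \inf_I^S(\Psi, X)$ be the canonical form of $\Phi$, where $\Psi$ is primitive. Then $\mathrm{Gen}(\Phi) = \mathrm{Gen}(X) \cup \{ S \}$, where $\mathrm{Gen}(X)$ is computed for $X$ as a subset of the positive roots $R_I^+$ of the quotient root system $R_I$ with base $I$.
   Context: Quotient root systems (QRS): a QRS $R$ is the set of non-zero images of a root system $\Delta$ (with base $\Sigma$) under the orthogonal projection of its ambient Euclidean space onto $(\mathrm{span}\,J)^\perp$ for some $J\subsetneq\Sigma$, with induced inner product; its base $S$ is the images of $\Sigma\setminus J$, and every root is an integer combination of $S$ with all coefficients $\ge0$ (positive roots $R^+$) or all $\le0$. $R$ is connected if the graph on $S$ with an edge between $\theta,\theta'$ iff $\langle\theta,\theta'\rangle<0$ is connected. For $K\subseteq S$: $R_K=R\cap\mathrm{span}\,K$ (a QRS with base $K$), $R_K^+=R_K\cap R^+$; $\pi_K$ is orthogonal projection onto $(\mathrm{span}\,K)^\perp$, $R/K$ the set of non-zero elements of $\pi_K(R)$ (a QRS with base the images of $S\setminus K$), $(R/K)^+=\pi_K(R^+)\setminus\{0\}$. Inflation: $\inf_K^S(\Psi,X):=\{\alpha\in R^+:\pi_K(\alpha)\in\Psi\}\cup X$ for $\Psi\subseteq(R/K)^+$, $X\subseteq R_K^+$; the same construction is used inside any QRS with any base (e.g. $\inf_K^I$ inside $R_I$ for $K\subseteq I$). For a QRS $R'$ with base $S'$ and $\Phi'\subseteq R'^+$, $\mathrm{Gen}(\Phi'):=\{K\subseteq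 S':\Phi'=\inf_K^{S'}(\Theta,Y)\text{ for some }\Theta,Y\}$. Primitive: $\Phi\ne\emptyset$, $\Phi\ne R^+$ and $\Phi=\inf_K^S(\Psi,X)$ implies $K\in\{\emptyset,S\}$ (same notion in $R/I$). Canonical form: for connected $R$, the unique expression $\Phi=\inf_I^S(\Psi,X)$ with $I\subsetneq S$ such that either $\Psi$ is primitive in $R/I$, or $\Psi\in\{\emptyset,(R/I)^+\}$ and $I$ is smallest with this property. *)

theory Defs
  imports "HOL-Analysis.Analysis"
begin

text \<open>A (reduced, crystallographic) root system, inside a finite-dimensional real inner
  product space (the ambient Euclidean space is the type 'a; the roots need not span it).\<close>
definition root_system :: "'a::euclidean_space set \<Rightarrow> bool" where
  "root_system \<Delta> \<longleftrightarrow>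
     finite \<Delta> \<and> 0 \<notin> \<Delta> \<and>
     (\<forall>\<alpha>\<in>\<Delta>. \<forall>\<beta>\<in>\<Delta>. \<beta> - (2 * (\<beta> \<bullet> \<alpha>) / (\<alpha> \<bullet> \<alpha>)) *\<^sub>R \<alpha> \<in> \<Delta>) \<and>
     (\<forall>\<alpha>\<in>\<Delta>. \<forall>\<beta>\<in>\<Delta>. 2 * (\<beta> \<bullet> \<alpha>) / (\<alpha> \<bullet> \<alpha>) \<in> \<int>) \<and>
     (\<forall>\<alpha>\<in>\<Delta>. \<forall>c::real. c *\<^sub>R \<alpha> \<in> \<Delta> \<longrightarrow> c = 1 \<or> c = -1)"

definition int_comb :: "'a::real_vector set \<Rightarrow> ('a \<Rightarrow> int) \<Rightarrow> 'a" where
  "int_comb B c = (\<Sum>b\<in>B. of_int (c b) *\<^sub>R b)"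

definition root_base :: "'a::euclidean_space set \<Rightarrow> 'a set \<Rightarrow> bool" where
  "root_base \<Delta> \<Sigma> \<longleftrightarrow>
     \<Sigma> \<subseteq> \<Delta> \<and> independent \<Sigma> \<and>
     (\<forall>\<alpha>\<in>\<Delta>. \<exists>c. \<alpha> = int_comb \<Sigma> c \<and> ((\<forall>\<sigma>\<in>\<Sigma>. c \<sigma> \<ge> 0) \<or> (\<forall>\<sigma>\<in>\<Sigma>. c \<sigma> \<le> 0)))"

definition perp_proj :: "'a::euclidean_space set \<Rightarrow> 'a \<Rightarrow> 'a" where
  "perp_proj K x =
     x - (THE y. y \<in> span K \<and> (\<forall>z\<in>span K. orthogonal (x - y) z))"

definition qrs :: "'a::euclidean_space set \<Rightarrow> 'a set \<Rightarrow> bool" where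
  "qrs R S \<longleftrightarrow>
     (\<exists>\<Delta> \<Sigma> J. root_system \<Delta> \<and> root_base \<Delta> \<Sigma> \<and> J \<subset> \<Sigma> \<and>
        R = perp_proj J ` \<Delta> - {0} \<and> S = perp_proj J ` (\<Sigma> - J))"

definition pos_roots :: "'a::euclidean_space set \<Rightarrow> 'a set \<Rightarrow> 'a set" where
  "pos_roots R S = {\<alpha>\<in>R. \<exists>c. \<alpha> = int_comb S c \<and> (\<forall>s\<in>S. c s \<ge> 0)}"

definition qrs_connected :: "'a::euclidean_space set \<Rightarrow> 'a set \<Rightarrow> bool" where
  "qrs_connected R S \<longleftrightarrow>
     (\<forall>\<theta>\<in>S. \<forall>\<theta>'\<in>S. (\<theta>, \<theta>') \<in> {(a, b). a \<in> S \<and> b \<in> S \<and> a \<bullet> b < 0}\<^sup>*)"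

definition sub_qrs :: "'a::euclidean_space set \<Rightarrow> 'a set \<Rightarrow> 'a set" where
  "sub_qrs R K = R \<inter> span K"

definition quot_qrs :: "'a::euclidean_space set \<Rightarrow> 'a set \<Rightarrow> 'a set" where
  "quot_qrs R K = perp_proj K ` R - {0}"

definition quot_base :: "'a::euclidean_space set \<Rightarrow> 'a set \<Rightarrow> 'a set" where
  "quot_base S K = perp_proj K ` (S - K)"

definition infl :: "'a::euclidean_space set \<Rightarrow> 'a set \<Rightarrow> 'a set \<Rightarrow> 'a set \<Rightarrow> 'a set \<Rightarrow> 'a set" where
  "infl R S K \<Psi> X = {\<alpha> \<in> pos_roots R S. perp_proj K \<alpha> \<in> \<Psi>} \<union> X"

definition infl_args :: "'a::euclidean_space set \<Rightarrow> 'a set \<Rightarrow> 'a set \<Rightarrow> 'a set \<Rightarrow> 'a set \<Rightarrow> bool" where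
  "infl_args R S K \<Psi> X \<longleftrightarrow>
     K \<subseteq> S \<and> \<Psi> \<subseteq> pos_roots (quot_qrs R K) (quot_base S K) \<and> X \<subseteq> pos_roots (sub_qrs R K) K"

definition Gen :: "'a::euclidean_space set \<Rightarrow> 'a set \<Rightarrow> 'a set \<Rightarrow> 'a set set" where
  "Gen R S \<Phi> = {K. K \<subseteq> S \<and> (\<exists>\<Theta> Y. infl_args R S K \<Theta> Y \<and> \<Phi> = infl R S K \<Theta> Y)}"

definition primitive :: "'a::euclidean_space set \<Rightarrow> 'a set \<Rightarrow> 'a set \<Rightarrow> bool" where
  "primitive R S \<Phi> \<longleftrightarrow>
     \<Phi> \<noteq> {} \<and> \<Phi> \<noteq> pos_roots R S \<and>
     (\<forall>K \<Psi> X. infl_args R S K \<Psi> X \<and> \<Phi> = infl R S K \<Psi> X \<longrightarrow> K = {} \<or> K = S)"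

definition canonical_form ::
  "'a::euclidean_space set \<Rightarrow> 'a set \<Rightarrow> 'a set \<Rightarrow> 'a set \<Rightarrow> 'a set \<Rightarrow> 'a set \<Rightarrow> bool" where
  "canonical_form R S \<Phi> I \<Psi> X \<longleftrightarrow>
     I \<subset> S \<and> infl_args R S I \<Psi> X \<and> \<Phi> = infl R S I \<Psi> X \<and>
     (primitive (quot_qrs R I) (quot_base S I) \<Psi> \<or>
      ((\<Psi> = {} \<or> \<Psi> = pos_roots (quot_qrs R I) (quot_base S I)) \<and>
       (\<forall>I' \<Psi>' X'. I' \<subset> S \<and> infl_args R S I' \<Psi>' X' \<and> \<Phi> = infl R S I' \<Psi>' X' \<and>
          (\<Psi>' = {} \<or> \<Psi>' = pos_roots (quot_qrs R I') (quot_base S I')) \<longrightarrow> I \<subseteq> I')))"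

end

theory Submission
  imports Defs
begin


lemma pp_ex:
  fixes x :: "'a::euclidean_space"
  shows "\<exists>y. y \<in> span K \<and> (\<forall>z\<in>span K. orthogonal (x - y) z)"
proof -
  obtain y z where "y \<in> span K" "\<And>w. w \<in> span K \<Longrightarrow> orthogonal z w" "x = y + z"
    using orthogonal_subspace_decomp_exists by blast
  then show ?thesis by (intro exI[of _ y]) auto
qed

lemma pp_uniq:
  fixes x :: "'a::euclidean_space"
  assumes "y \<in> span K" "\<forall>z\<in>span K. orthogonal (x - y) z"
    and "y' \<in> span K" "\<forall>z\<in>span K. orthogonal (x - y') z"
  shows "y = y'"
proof -
  have d: "y - y' \<in> span K" using assms by (simp add: span_diff)
  have "orthogonal (x - y') (y - y')" "orthogonal (x - y) (y - y')" using assms d by auto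
  then have "orthogonal ((x - y') - (x - y)) (y - y')"
    by (simp add: orthogonal_def inner_diff_left)
  then have "orthogonal (y - y') (y - y')" by simp
  then have "y - y' = 0" unfolding orthogonal_def by (simp only: inner_eq_zero_iff)
  then show ?thesis by simp
qed

lemma pp_char:
  fixes x :: "'a::euclidean_space"
  assumes "y \<in> span K" "\<forall>z\<in>span K. orthogonal (x - y) z"
  shows "perp_proj K x = x - y"
proof -
  have "(THE y. y \<in> span K \<and> (\<forall>z\<in>span K. orthogonal (x - y) z)) = y"
  proof (rule the_equality)
    show "y \<in> span K \<and> (\<forall>z\<in>span K. orthogonal (x - y) z)" using assms by simp
    fix y' assume "y' \<in> span K \<and> (\<forall>z\<in>span K. orthogonal (x - y') z)"
    then show "y' = y" using pp_uniq[of y' K x y] assms by simp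
  qed
  then show ?thesis unfolding perp_proj_def by simp
qed

lemma pp_props:
  fixes x :: "'a::euclidean_space"
  shows "x - perp_proj K x \<in> span K \<and> (\<forall>z\<in>span K. orthogonal (perp_proj K x) z)"
proof -
  obtain y where y: "y \<in> span K" "\<forall>z\<in>span K. orthogonal (x - y) z" using pp_ex by blast
  then show ?thesis using pp_char[OF y] by simp
qed

lemma pp_in_span: "x - perp_proj K x \<in> span K"
  using pp_props by blast

lemma pp_orth: "z \<in> span K \<Longrightarrow> perp_proj K x \<bullet> z = 0"
  using pp_props by (auto simp: orthogonal_def)

lemma pp_orth': "z \<in> span K \<Longrightarrow> z \<bullet> perp_proj K x = 0"
  using pp_orth by (simp add: inner_commute)

lemma pp_charI:
  fixes x :: "'a::euclidean_space"
  assumes "x - p \<in> span K" "\<And>z. z \<in> span K \<Longrightarrow> p \<bullet> z = 0"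
  shows "perp_proj K x = p"
proof -
  have "perp_proj K x = x - (x - p)"
    by (rule pp_char) (use assms in \<open>auto simp: orthogonal_def\<close>)
  then show ?thesis by simp
qed

lemma pp_add: "perp_proj K (x + y) = perp_proj K x + perp_proj K y"
  by (rule pp_charI) (auto simp: pp_orth inner_add_left span_add[of "x - perp_proj K x" K "y - perp_proj K y", simplified pp_in_span] algebra_simps
      intro: back_subst[where P="\<lambda>t. t \<in> span K", OF span_add[OF pp_in_span[of x] pp_in_span[of y]]])

lemma pp_scale: "perp_proj K (c *\<^sub>R x) = c *\<^sub>R perp_proj K x"
  by (rule pp_charI) (auto simp: pp_orth algebra_simps
      intro: back_subst[where P="\<lambda>t. t \<in> span K", OF span_mul[OF pp_in_span[of x], of c]])

lemma pp_linear: "linear (perp_proj K)"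
  by (rule linearI) (simp_all add: pp_add pp_scale)

lemma pp_diff: "perp_proj K (x - y) = perp_proj K x - perp_proj K y"
  using linear_diff[OF pp_linear] .

lemma pp_minus: "perp_proj K (- x) = - perp_proj K x"
  using linear_neg[OF pp_linear] .

lemma pp_sum: "perp_proj K (sum f A) = (\<Sum>a\<in>A. perp_proj K (f a))"
  using linear_sum[OF pp_linear] .

lemma pp_zero: "perp_proj K 0 = 0"
  using linear_0[OF pp_linear] .

lemma pp_span_zero: "x \<in> span K \<Longrightarrow> perp_proj K x = 0"
  by (rule pp_charI) auto

lemma pp_zero_iff: "perp_proj K x = 0 \<longleftrightarrow> x \<in> span K"
  using pp_in_span[of x K] pp_span_zero by fastforce

lemma pp_eq_iff: "perp_proj K x = perp_proj K y \<longleftrightarrow> x - y \<in> span K"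
  by (metis pp_diff pp_zero_iff eq_iff_diff_eq_0)

lemma pp_compose: "span K \<subseteq> span L \<Longrightarrow> perp_proj L (perp_proj K x) = perp_proj L x"
  by (metis pp_eq_iff pp_in_span subsetD span_neg minus_diff_eq)

lemma pp_id: "(\<And>z. z \<in> span K \<Longrightarrow> x \<bullet> z = 0) \<Longrightarrow> perp_proj K x = x"
  by (rule pp_charI) (auto simp: span_zero)

lemma pp_inner: "perp_proj K x \<bullet> perp_proj K y = perp_proj K x \<bullet> y"
proof -
  have "perp_proj K x \<bullet> (y - perp_proj K y) = 0" using pp_orth pp_in_span by blast
  then show ?thesis by (simp add: inner_diff_right)
qed

lemma pp_idem: "perp_proj K (perp_proj K x) = perp_proj K x"
  by (rule pp_compose) simp



definition cf :: "'a::real_vector set \<Rightarrow> 'a \<Rightarrow> 'a \<Rightarrow> real" where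
  "cf B x = (SOME c. x = (\<Sum>b\<in>B. c b *\<^sub>R b))"

lemma comb_unique:
  fixes B :: "'a::euclidean_space set"
  assumes "finite B" "independent B" "(\<Sum>b\<in>B. c b *\<^sub>R b) = (\<Sum>b\<in>B. d b *\<^sub>R b)" "b \<in> B"
  shows "c b = d b"
proof (rule ccontr)
  assume ne: "c b \<noteq> d b"
  have "(\<Sum>v\<in>B. (c v - d v) *\<^sub>R v) = 0"
    using assms(3) by (simp add: scaleR_diff_left sum_subtractf)
  then have "dependent B"
    using ne assms(4) unfolding dependent_finite[OF assms(1)] by (intro exI[of _ "\<lambda>v. c v - d v"]) auto
  then show False using assms(2) by simp
qed

lemma cf_eq:
  fixes B :: "'a::euclidean_space set"
  assumes "finite B" "independent B" "x = (\<Sum>b\<in>B. c b *\<^sub>R b)" "b \<in> B"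
  shows "cf B x b = c b"
proof -
  have "x = (\<Sum>b\<in>B. cf B x b *\<^sub>R b)"
    unfolding cf_def using someI[where P="\<lambda>c. x = (\<Sum>b\<in>B. c b *\<^sub>R b)", OF assms(3)] .
  then show ?thesis using comb_unique[OF assms(1,2), of "cf B x" c b] assms by simp
qed

lemma cf_span:
  fixes B :: "'a::euclidean_space set"
  assumes "finite B" "x \<in> span B"
  shows "x = (\<Sum>b\<in>B. cf B x b *\<^sub>R b)"
proof -
  obtain u where "x = (\<Sum>v\<in>B. u v *\<^sub>R v)" using assms span_finite[OF assms(1)] by auto
  then show ?thesis unfolding cf_def by (rule someI[where P="\<lambda>c. x = (\<Sum>b\<in>B. c b *\<^sub>R b)"])
qed

lemma comb_in_span: "finite B \<Longrightarrow> (\<Sum>b\<in>B. c b *\<^sub>R b) \<in> span B"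
  by (intro span_sum span_mul span_base) auto

lemma L_span:
  fixes B :: "'a::euclidean_space set"
  assumes "finite B" "independent B" "T \<subseteq> B"
  shows "(\<Sum>b\<in>B. c b *\<^sub>R b) \<in> span T \<longleftrightarrow> (\<forall>b\<in>B-T. c b = 0)"
proof
  assume h: "(\<Sum>b\<in>B. c b *\<^sub>R b) \<in> span T"
  have fT: "finite T" using assms finite_subset by blast
  obtain u where u: "(\<Sum>b\<in>B. c b *\<^sub>R b) = (\<Sum>v\<in>T. u v *\<^sub>R v)"
    using h span_finite[OF fT] by auto
  also have "\<dots> = (\<Sum>v\<in>B. (if v \<in> T then u v else 0) *\<^sub>R v)"
    using assms(1,3) by (auto intro!: sum.mono_neutral_cong_left)
  finally show "\<forall>b\<in>B-T. c b = 0"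
    using comb_unique[OF assms(1,2)] by fastforce
next
  assume h: "\<forall>b\<in>B-T. c b = 0"
  have "(\<Sum>b\<in>B. c b *\<^sub>R b) = (\<Sum>b\<in>T. c b *\<^sub>R b)"
    using assms h by (intro sum.mono_neutral_right) auto
  also have "\<dots> \<in> span T"
    using assms finite_subset comb_in_span by blast
  finally show "(\<Sum>b\<in>B. c b *\<^sub>R b) \<in> span T" .
qed

lemma int_comb_real: "int_comb B c = (\<Sum>b\<in>B. real_of_int (c b) *\<^sub>R b)"
  unfolding int_comb_def by simp

definition good :: "'a::euclidean_space set \<Rightarrow> 'a set \<Rightarrow> bool" where
  "good R S \<longleftrightarrow> finite S \<and> independent S \<and> 0 \<notin> R \<and>
     (\<forall>\<alpha>\<in>R. \<exists>c. \<alpha> = int_comb S c \<and> ((\<forall>s\<in>S. c s \<ge> 0) \<or> (\<forall>s\<in>S. c s \<le> 0)))"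

lemma pos_roots_sub: "pos_roots R S \<subseteq> R"
  unfolding pos_roots_def by auto

lemma good_span: "good R S \<Longrightarrow> \<alpha> \<in> R \<Longrightarrow> \<alpha> \<in> span S"
  unfolding good_def int_comb_real by (auto intro: comb_in_span)

lemma delta_comb:
  assumes "finite S" "s \<in> S"
  shows "(\<Sum>b\<in>S. (if b = s then 1 else 0) *\<^sub>R b) = (s::'a::real_vector)"
proof -
  have "(\<Sum>b\<in>S. (if b = s then 1 else 0) *\<^sub>R b) = (\<Sum>b\<in>S. if b = s then b else 0)"
    by (intro sum.cong) auto
  also have "\<dots> = s" using assms by simp
  finally show ?thesis .
qed

lemma pp_inj:
  fixes S :: "'a::euclidean_space set"
  assumes "finite S" "independent S" "K \<subseteq> S"
  shows "inj_on (perp_proj K) (S - K)"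
proof (rule inj_onI)
  fix s t assume st: "s \<in> S - K" "t \<in> S - K" "perp_proj K s = perp_proj K t"
  then have "s - t \<in> span K" using pp_eq_iff by blast
  define c where "c = (\<lambda>b. (if b = s then 1 else 0) - (if b = t then 1 else (0::real)))"
  have "s - t = (\<Sum>b\<in>S. c b *\<^sub>R b)"
    using delta_comb[OF assms(1), of s] delta_comb[OF assms(1), of t] st
    unfolding c_def by (simp add: scaleR_diff_left sum_subtractf)
  with \<open>s - t \<in> span K\<close> have "\<forall>b\<in>S-K. c b = 0"
    using L_span[OF assms, of c] by simp
  then have "c s = 0" using st by blast
  then show "s = t" unfolding c_def by (auto split: if_splits)
qed

lemma pp_comb:
  fixes S :: "'a::euclidean_space set"
  assumes "finite S" "independent S" "K \<subseteq> S"
  shows "perp_proj K (\<Sum>s\<in>S. c s *\<^sub>R s) =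
     (\<Sum>t\<in>perp_proj K ` (S - K). c (inv_into (S - K) (perp_proj K) t) *\<^sub>R t)"
proof -
  have "perp_proj K (\<Sum>s\<in>S. c s *\<^sub>R s) = (\<Sum>s\<in>S. c s *\<^sub>R perp_proj K s)"
    by (simp add: pp_sum pp_scale)
  also have "\<dots> = (\<Sum>s\<in>S - K. c s *\<^sub>R perp_proj K s)"
    using assms by (intro sum.mono_neutral_right) (auto simp: pp_span_zero span_base)
  also have "\<dots> = (\<Sum>t\<in>perp_proj K ` (S - K). c (inv_into (S - K) (perp_proj K) t) *\<^sub>R t)"
    using pp_inj[OF assms] by (subst sum.reindex) (auto simp: o_def inv_into_f_f intro!: sum.cong)
  finally show ?thesis .
qed

lemma quot_base_indep:
  fixes S :: "'a::euclidean_space set"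
  assumes "finite S" "independent S" "K \<subseteq> S"
  shows "independent (quot_base S K)"
proof -
  let ?p = "perp_proj K"
  let ?B = "?p ` (S - K)"
  have fB: "finite ?B" using assms by simp
  have inj: "inj_on ?p (S - K)" using pp_inj[OF assms] .
  show ?thesis unfolding quot_base_def
  proof (rule ccontr)
    assume "\<not> independent ?B"
    then obtain u v where uv: "v \<in> ?B" "u v \<noteq> 0" "(\<Sum>w\<in>?B. u w *\<^sub>R w) = 0"
      using dependent_finite[OF fB] by auto
    let ?c = "\<lambda>s. if s \<in> S - K then u (?p s) else 0"
    have e1: "(\<Sum>w\<in>?B. u w *\<^sub>R w) = (\<Sum>s\<in>S - K. u (?p s) *\<^sub>R ?p s)"
      by (subst sum.reindex[OF inj]) (simp add: o_def)
    have e2: "(\<Sum>s\<in>S - K. u (?p s) *\<^sub>R ?p s) = ?p (\<Sum>s\<in>S - K. u (?p s) *\<^sub>R s)"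
      by (simp add: pp_sum pp_scale)
    have e3: "(\<Sum>s\<in>S - K. u (?p s) *\<^sub>R s) = (\<Sum>s\<in>S. ?c s *\<^sub>R s)"
      using assms by (intro sum.mono_neutral_cong_left) auto
    have "?p (\<Sum>s\<in>S. ?c s *\<^sub>R s) = 0" using e1 e2 e3 uv(3) by simp
    then have "(\<Sum>s\<in>S. ?c s *\<^sub>R s) \<in> span K" by (simp only: pp_zero_iff)
    then have "\<forall>s\<in>S - K. ?c s = 0" by (simp only: L_span[OF assms])
    moreover obtain s where "s \<in> S - K" "v = ?p s" using uv by auto
    ultimately show False using uv by auto
  qed
qed



lemma goodD:
  assumes "good R S"
  shows "finite S" "independent S" "0 \<notin> R"
    "\<alpha> \<in> R \<Longrightarrow> \<exists>c. \<alpha> = int_comb S c \<and> ((\<forall>s\<in>S. c s \<ge> 0) \<or> (\<forall>s\<in>S. c s \<le> 0))"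
  using assms unfolding good_def by auto

lemma posD: "\<alpha> \<in> pos_roots R S \<Longrightarrow> \<alpha> \<in> R \<and> (\<exists>c. \<alpha> = int_comb S c \<and> (\<forall>s\<in>S. c s \<ge> 0))"
  unfolding pos_roots_def by auto

lemma quot_pos:
  assumes g: "good R S" and K: "K \<subseteq> S" and a: "\<alpha> \<in> pos_roots R S" "\<alpha> \<notin> span K"
  shows "perp_proj K \<alpha> \<in> pos_roots (quot_qrs R K) (quot_base S K)"
proof -
  note gd = goodD[OF g]
  obtain c where c: "\<alpha> = int_comb S c" "\<forall>s\<in>S. c s \<ge> 0" "\<alpha> \<in> R" using posD[OF a(1)] by blast
  have ne: "perp_proj K \<alpha> \<noteq> 0" using a(2) pp_zero_iff by blast
  have "perp_proj K \<alpha> = (\<Sum>t\<in>quot_base S K. real_of_int (c (inv_into (S - K) (perp_proj K) t)) *\<^sub>R t)"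
    unfolding c(1) int_comb_real quot_base_def by (rule pp_comb[OF gd(1,2) K])
  then have "perp_proj K \<alpha> = int_comb (quot_base S K) (\<lambda>t. c (inv_into (S - K) (perp_proj K) t))"
    by (simp add: int_comb_real)
  moreover have "\<forall>t\<in>quot_base S K. c (inv_into (S - K) (perp_proj K) t) \<ge> 0"
    using c(2) pp_inj[OF gd(1,2) K] unfolding quot_base_def by (auto simp: inv_into_f_f)
  moreover have "perp_proj K \<alpha> \<in> quot_qrs R K" using c(3) ne unfolding quot_qrs_def by auto
  ultimately show ?thesis unfolding pos_roots_def by blast
qed

lemma sub_pos:
  assumes g: "good R S" and K: "K \<subseteq> S" and a: "\<alpha> \<in> pos_roots R S" "\<alpha> \<in> span K"
  shows "\<alpha> \<in> pos_roots (sub_qrs R K) K"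
proof -
  note gd = goodD[OF g]
  obtain c where c: "\<alpha> = int_comb S c" "\<forall>s\<in>S. c s \<ge> 0" "\<alpha> \<in> R" using posD[OF a(1)] by blast
  have "\<forall>s\<in>S-K. real_of_int (c s) = 0"
    using a(2) L_span[OF gd(1,2) K, of "\<lambda>s. real_of_int (c s)"] c(1) by (simp add: int_comb_real)
  then have "\<alpha> = (\<Sum>s\<in>K. real_of_int (c s) *\<^sub>R s)"
    unfolding c(1) int_comb_real using gd(1) K by (intro sum.mono_neutral_right) auto
  then have "\<alpha> = int_comb K c" by (simp add: int_comb_real)
  then show ?thesis using c a(2) K unfolding pos_roots_def sub_qrs_def by auto
qed

lemma sub_pos_span: "\<alpha> \<in> pos_roots (sub_qrs R K) K \<Longrightarrow> \<alpha> \<in> span K"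
  unfolding pos_roots_def sub_qrs_def by auto

lemma sub_pos_pos:
  assumes "good R S" "K \<subseteq> S" "\<alpha> \<in> pos_roots (sub_qrs R K) K"
  shows "\<alpha> \<in> pos_roots R S"
proof -
  have fS: "finite S" using goodD[OF assms(1)] by simp
  obtain c where c: "\<alpha> = int_comb K c" "\<forall>s\<in>K. c s \<ge> 0" "\<alpha> \<in> R"
    using assms(3) unfolding pos_roots_def sub_qrs_def by auto
  let ?d = "\<lambda>s. if s \<in> K then c s else 0"
  have "\<alpha> = int_comb S ?d"
    unfolding c(1) int_comb_def using fS assms(2)
    by (intro sum.mono_neutral_cong_left) auto
  then show ?thesis using c unfolding pos_roots_def by auto
qed

lemma infl_sub_pos:
  assumes "good R S" "infl_args R S K \<Theta> Y"
  shows "infl R S K \<Theta> Y \<subseteq> pos_roots R S"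
  using assms sub_pos_pos unfolding infl_def infl_args_def by blast

lemma GenChar:
  assumes g: "good R S" and Phi: "\<Phi> \<subseteq> pos_roots R S" and K: "K \<subseteq> S"
  shows "K \<in> Gen R S \<Phi> \<longleftrightarrow>
    (\<forall>\<alpha>\<in>pos_roots R S. \<forall>\<beta>\<in>pos_roots R S. \<alpha> \<notin> span K \<longrightarrow> \<alpha> - \<beta> \<in> span K \<longrightarrow> (\<alpha> \<in> \<Phi> \<longleftrightarrow> \<beta> \<in> \<Phi>))"
proof
  assume "K \<in> Gen R S \<Phi>"
  then obtain \<Theta> Y where args: "infl_args R S K \<Theta> Y" and eq: "\<Phi> = infl R S K \<Theta> Y"
    unfolding Gen_def by blast
  have Y: "Y \<subseteq> span K" using args sub_pos_span unfolding infl_args_def by blast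
  show "\<forall>\<alpha>\<in>pos_roots R S. \<forall>\<beta>\<in>pos_roots R S. \<alpha> \<notin> span K \<longrightarrow> \<alpha> - \<beta> \<in> span K \<longrightarrow> (\<alpha> \<in> \<Phi> \<longleftrightarrow> \<beta> \<in> \<Phi>)"
  proof (intro ballI impI)
    fix \<alpha> \<beta> assume ab: "\<alpha> \<in> pos_roots R S" "\<beta> \<in> pos_roots R S" "\<alpha> \<notin> span K" "\<alpha> - \<beta> \<in> span K"
    have b: "\<beta> \<notin> span K"
    proof
      assume "\<beta> \<in> span K"
      then have "(\<alpha> - \<beta>) + \<beta> \<in> span K" using ab(4) span_add by blast
      then show False using ab(3) by simp
    qed
    have pe: "perp_proj K \<alpha> = perp_proj K \<beta>" using ab(4) pp_eq_iff by blast
    show "\<alpha> \<in> \<Phi> \<longleftrightarrow> \<beta> \<in> \<Phi>"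
      unfolding eq infl_def using ab b Y pe by auto
  qed
next
  assume H: "\<forall>\<alpha>\<in>pos_roots R S. \<forall>\<beta>\<in>pos_roots R S. \<alpha> \<notin> span K \<longrightarrow> \<alpha> - \<beta> \<in> span K \<longrightarrow> (\<alpha> \<in> \<Phi> \<longleftrightarrow> \<beta> \<in> \<Phi>)"
  define \<Theta> where "\<Theta> = perp_proj K ` (\<Phi> - span K)"
  define Y where "Y = \<Phi> \<inter> span K"
  have a1: "\<Theta> \<subseteq> pos_roots (quot_qrs R K) (quot_base S K)"
    unfolding \<Theta>_def using quot_pos[OF g K] Phi by blast
  have a2: "Y \<subseteq> pos_roots (sub_qrs R K) K"
    unfolding Y_def using sub_pos[OF g K] Phi by blast
  have eq: "\<Phi> = infl R S K \<Theta> Y"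
  proof
    show "\<Phi> \<subseteq> infl R S K \<Theta> Y" unfolding infl_def \<Theta>_def Y_def using Phi by blast
  next
    show "infl R S K \<Theta> Y \<subseteq> \<Phi>"
    proof
      fix \<alpha> assume "\<alpha> \<in> infl R S K \<Theta> Y"
      then consider "\<alpha> \<in> Y" | "\<alpha> \<in> pos_roots R S" "perp_proj K \<alpha> \<in> \<Theta>" unfolding infl_def by blast
      then show "\<alpha> \<in> \<Phi>"
      proof cases
        case 1 then show ?thesis unfolding Y_def by simp
      next
        case 2
        then obtain \<beta> where b: "\<beta> \<in> \<Phi>" "\<beta> \<notin> span K" "perp_proj K \<alpha> = perp_proj K \<beta>"
          unfolding \<Theta>_def by auto
        have d: "\<alpha> - \<beta> \<in> span K" using b(3) pp_eq_iff by blast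
        have "\<alpha> \<notin> span K"
        proof
          assume "\<alpha> \<in> span K"
          then have "\<alpha> - (\<alpha> - \<beta>) \<in> span K" using d span_diff by blast
          then show False using b(2) by simp
        qed
        then show ?thesis using H 2(1) b(1) d Phi by blast
      qed
    qed
  qed
  show "K \<in> Gen R S \<Phi>"
    unfolding Gen_def infl_args_def using K a1 a2 eq by blast
qed

lemma quot_lift:
  assumes g: "good R S" and K: "K \<subseteq> S"
    and b: "\<beta> \<in> pos_roots (quot_qrs R K) (quot_base S K)"
  shows "\<exists>\<alpha>\<in>pos_roots R S. \<alpha> \<notin> span K \<and> \<beta> = perp_proj K \<alpha>"
proof -
  note gd = goodD[OF g]
  obtain d where d: "\<beta> = int_comb (quot_base S K) d" "\<forall>t\<in>quot_base S K. d t \<ge> 0" "\<beta> \<in> quot_qrs R K"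
    using b unfolding pos_roots_def by auto
  obtain \<alpha> where a: "\<alpha> \<in> R" "\<beta> = perp_proj K \<alpha>" "\<beta> \<noteq> 0"
    using d(3) unfolding quot_qrs_def by auto
  have na: "\<alpha> \<notin> span K" using a pp_zero_iff by blast
  obtain c where c: "\<alpha> = int_comb S c" "(\<forall>s\<in>S. c s \<ge> 0) \<or> (\<forall>s\<in>S. c s \<le> 0)"
    using gd(4)[OF a(1)] by blast
  show ?thesis
  proof (cases "\<forall>s\<in>S. c s \<ge> 0")
    case True
    then have "\<alpha> \<in> pos_roots R S" using a c unfolding pos_roots_def by auto
    then show ?thesis using na a by blast
  next
    case False
    then have neg: "\<forall>s\<in>S. c s \<le> 0" using c by blast
    let ?B = "quot_base S K"
    let ?e = "\<lambda>t. real_of_int (c (inv_into (S - K) (perp_proj K) t))"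
    have fB: "finite ?B" using gd(1) unfolding quot_base_def by simp
    have iB: "independent ?B" using quot_base_indep[OF gd(1,2) K] .
    have e1: "\<beta> = (\<Sum>t\<in>?B. ?e t *\<^sub>R t)"
      unfolding a(2) c(1) int_comb_real quot_base_def by (rule pp_comb[OF gd(1,2) K])
    have e2: "\<beta> = (\<Sum>t\<in>?B. real_of_int (d t) *\<^sub>R t)" using d(1) by (simp add: int_comb_real)
    have eqs: "(\<Sum>t\<in>?B. ?e t *\<^sub>R t) = (\<Sum>t\<in>?B. real_of_int (d t) *\<^sub>R t)"
      by (simp only: e1[symmetric] e2[symmetric])
    have "\<forall>t\<in>?B. ?e t = real_of_int (d t)"
      using comb_unique[OF fB iB eqs] by blast
    moreover have "\<forall>t\<in>?B. ?e t \<le> 0"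
      using neg pp_inj[OF gd(1,2) K] unfolding quot_base_def by (auto simp: inv_into_f_f)
    ultimately have "\<forall>t\<in>?B. ?e t = 0" using d(2) by force
    then have "\<beta> = 0" using e1 by simp
    then show ?thesis using a(3) by blast
  qed
qed

lemma span_pp_image:
  fixes x :: "'a::euclidean_space"
  shows "perp_proj I x \<in> span (perp_proj I ` M) \<longleftrightarrow> x \<in> span (I \<union> M)"
proof
  assume "perp_proj I x \<in> span (perp_proj I ` M)"
  then obtain m where m: "m \<in> span M" "perp_proj I x = perp_proj I m"
    unfolding span_linear_image[OF pp_linear] by blast
  then have "x - m \<in> span I" using pp_eq_iff by blast
  then have "(x - m) + m \<in> span (I \<union> M)"
    using m(1) span_mono[of I "I \<union> M"] span_mono[of M "I \<union> M"] span_add by blast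
  then show "x \<in> span (I \<union> M)" by simp
next
  assume "x \<in> span (I \<union> M)"
  then have "perp_proj I x \<in> span (perp_proj I ` (I \<union> M))"
    unfolding span_linear_image[OF pp_linear] by blast
  moreover have "perp_proj I ` (I \<union> M) \<subseteq> insert 0 (perp_proj I ` M)"
    using pp_span_zero span_base by fastforce
  then have "span (perp_proj I ` (I \<union> M)) \<subseteq> span (insert 0 (perp_proj I ` M))"
    by (rule span_mono)
  then have "span (perp_proj I ` (I \<union> M)) \<subseteq> span (perp_proj I ` M)" by (simp only: span_insert_0)
  ultimately show "perp_proj I x \<in> span (perp_proj I ` M)" by blast
qed



section \<open>Root system basics\<close>

lemma rsD:
  assumes "root_system \<Delta>"
  shows "finite \<Delta>" "0 \<notin> \<Delta>"
    "\<alpha> \<in> \<Delta> \<Longrightarrow> \<beta> \<in> \<Delta> \<Longrightarrow> \<beta> - (2 * (\<beta> \<bullet> \<alpha>) / (\<alpha> \<bullet> \<alpha>)) *\<^sub>R \<alpha> \<in> \<Delta>"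
    "\<alpha> \<in> \<Delta> \<Longrightarrow> \<beta> \<in> \<Delta> \<Longrightarrow> 2 * (\<beta> \<bullet> \<alpha>) / (\<alpha> \<bullet> \<alpha>) \<in> \<int>"
    "\<alpha> \<in> \<Delta> \<Longrightarrow> c *\<^sub>R \<alpha> \<in> \<Delta> \<Longrightarrow> c = 1 \<or> c = -1"
  using assms unfolding root_system_def by blast+

lemma rs_neg:
  assumes "root_system \<Delta>" "\<alpha> \<in> \<Delta>"
  shows "- \<alpha> \<in> \<Delta>"
proof -
  have "\<alpha> \<noteq> 0" using rsD(2)[OF assms(1)] assms(2) by auto
  then have "\<alpha> \<bullet> \<alpha> \<noteq> 0" by simp
  then have "\<alpha> - (2 * (\<alpha> \<bullet> \<alpha>) / (\<alpha> \<bullet> \<alpha>)) *\<^sub>R \<alpha> = \<alpha> - 2 *\<^sub>R \<alpha>" by simp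
  also have "\<dots> = - \<alpha>" by (simp add: scaleR_2)
  finally have "\<alpha> - (2 * (\<alpha> \<bullet> \<alpha>) / (\<alpha> \<bullet> \<alpha>)) *\<^sub>R \<alpha> = - \<alpha>" .
  then show ?thesis using rsD(3)[OF assms(1) assms(2) assms(2)] by simp
qed

lemma int_small:
  fixes x y :: real
  assumes "x \<in> \<int>" "y \<in> \<int>" "x > 0" "y > 0" "x * y < 4"
  shows "x = 1 \<or> y = 1"
proof -
  obtain m where m: "x = of_int m" using assms(1) Ints_cases by blast
  obtain n where n: "y = of_int n" using assms(2) Ints_cases by blast
  have "m \<ge> 1" "n \<ge> 1" using assms(3,4) m n by auto
  moreover have "m * n < 4" using assms(5) m n by (metis of_int_less_iff of_int_mult of_int_numeral)
  ultimately have "m = 1 \<or> n = 1"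
  proof -
    assume h: "m \<ge> 1" "n \<ge> 1" "m * n < 4"
    show ?thesis
    proof (rule ccontr)
      assume "\<not> ?thesis"
      then have "m \<ge> 2" "n \<ge> 2" using h by auto
      then have "m * n \<ge> 2 * 2" by (intro mult_mono) auto
      then show False using h by simp
    qed
  qed
  then show ?thesis using m n by auto
qed

lemma F2:
  assumes rs: "root_system \<Delta>" and ab: "\<alpha> \<in> \<Delta>" "\<beta> \<in> \<Delta>" "\<alpha> \<bullet> \<beta> > 0" "\<alpha> \<noteq> \<beta>"
  shows "\<alpha> - \<beta> \<in> \<Delta>"
proof -
  have a0: "\<alpha> \<noteq> 0" "\<beta> \<noteq> 0" using rsD(2)[OF rs] ab by auto
  have na: "norm \<alpha> > 0" "norm \<beta> > 0" using a0 by auto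
  have lt: "\<alpha> \<bullet> \<beta> < norm \<alpha> * norm \<beta>"
  proof (rule ccontr)
    assume "\<not> ?thesis"
    then have "\<alpha> \<bullet> \<beta> = norm \<alpha> * norm \<beta>" using norm_cauchy_schwarz[of \<alpha> \<beta>] by linarith
    then have "norm \<alpha> *\<^sub>R \<beta> = norm \<beta> *\<^sub>R \<alpha>" using norm_cauchy_schwarz_eq by blast
    then have "(1 / norm \<alpha>) *\<^sub>R (norm \<alpha> *\<^sub>R \<beta>) = (1 / norm \<alpha>) *\<^sub>R (norm \<beta> *\<^sub>R \<alpha>)" by simp
    then have eq: "\<beta> = (norm \<beta> / norm \<alpha>) *\<^sub>R \<alpha>" using na by simp
    define c where "c = norm \<beta> / norm \<alpha>"
    have eqc: "\<beta> = c *\<^sub>R \<alpha>" using eq unfolding c_def .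
    then have "c = 1 \<or> c = -1" using rsD(5)[OF rs ab(1), of c] ab(2) by simp
    moreover have "c > 0" using na unfolding c_def by simp
    ultimately have "c = 1" by linarith
    then have "\<beta> = \<alpha>" using eqc by simp
    then show False using ab(4) by simp
  qed
  have aa: "\<alpha> \<bullet> \<alpha> = (norm \<alpha>)\<^sup>2" "\<beta> \<bullet> \<beta> = (norm \<beta>)\<^sup>2" by (simp_all add: power2_norm_eq_inner)
  have sq: "(\<alpha> \<bullet> \<beta>)\<^sup>2 < (\<alpha> \<bullet> \<alpha>) * (\<beta> \<bullet> \<beta>)"
  proof -
    have "(\<alpha> \<bullet> \<beta>)\<^sup>2 < (norm \<alpha> * norm \<beta>)\<^sup>2" using lt ab(3) by (intro power_strict_mono) auto
    then show ?thesis using aa by (simp add: power_mult_distrib)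
  qed
  define n1 where "n1 = 2 * (\<alpha> \<bullet> \<beta>) / (\<beta> \<bullet> \<beta>)"
  define n2 where "n2 = 2 * (\<beta> \<bullet> \<alpha>) / (\<alpha> \<bullet> \<alpha>)"
  have pa: "\<alpha> \<bullet> \<alpha> > 0" "\<beta> \<bullet> \<beta> > 0" using a0 by auto
  have i1: "n1 \<in> \<int>" unfolding n1_def using rsD(4)[OF rs ab(2) ab(1)] .
  have i2: "n2 \<in> \<int>" unfolding n2_def using rsD(4)[OF rs ab(1) ab(2)] .
  have p1: "n1 > 0" "n2 > 0" unfolding n1_def n2_def using pa ab(3) by (auto simp: inner_commute)
  have "n1 * n2 = 4 * (\<alpha> \<bullet> \<beta>)\<^sup>2 / ((\<alpha> \<bullet> \<alpha>) * (\<beta> \<bullet> \<beta>))"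
    unfolding n1_def n2_def by (simp add: inner_commute power2_eq_square field_simps)
  also have "\<dots> < 4" using sq pa by (simp add: field_simps)
  finally have "n1 = 1 \<or> n2 = 1" using int_small[OF i1 i2 p1] by blast
  then show ?thesis
  proof
    assume "n1 = 1"
    then have e: "2 * (\<alpha> \<bullet> \<beta>) / (\<beta> \<bullet> \<beta>) = 1" unfolding n1_def .
    show ?thesis using rsD(3)[OF rs ab(2) ab(1)] unfolding e scaleR_one .
  next
    assume "n2 = 1"
    then have e: "2 * (\<beta> \<bullet> \<alpha>) / (\<alpha> \<bullet> \<alpha>) = 1" unfolding n2_def .
    have "\<beta> - \<alpha> \<in> \<Delta>" using rsD(3)[OF rs ab(1) ab(2)] unfolding e scaleR_one .
    from rs_neg[OF rs this] show ?thesis by simp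
  qed
qed

lemma F1:
  assumes rs: "root_system \<Delta>" and ab: "\<alpha> \<in> \<Delta>" "\<beta> \<in> \<Delta>" "\<alpha> \<bullet> \<beta> < 0" "\<alpha> \<noteq> - \<beta>"
  shows "\<alpha> + \<beta> \<in> \<Delta>"
  using F2[OF rs ab(1) rs_neg[OF rs ab(2)]] ab(3,4) by simp

section \<open>Coefficients with respect to a base\<close>

lemma rbD:
  assumes "root_base \<Delta> \<Sigma>"
  shows "\<Sigma> \<subseteq> \<Delta>" "independent \<Sigma>" "finite \<Sigma>"
    "\<alpha> \<in> \<Delta> \<Longrightarrow> \<exists>c. \<alpha> = int_comb \<Sigma> c \<and> ((\<forall>\<sigma>\<in>\<Sigma>. c \<sigma> \<ge> 0) \<or> (\<forall>\<sigma>\<in>\<Sigma>. c \<sigma> \<le> 0))"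
  using assms finiteI_independent unfolding root_base_def by blast+

lemma rb_span: "root_base \<Delta> \<Sigma> \<Longrightarrow> \<alpha> \<in> \<Delta> \<Longrightarrow> \<alpha> \<in> span \<Sigma>"
  using rbD(4)[of \<Delta> \<Sigma> \<alpha>] rbD(3)[of \<Delta> \<Sigma>] comb_in_span by (fastforce simp: int_comb_real)

lemma cf_root:
  assumes rb: "root_base \<Delta> \<Sigma>" and a: "\<alpha> \<in> \<Delta>"
  shows "(\<forall>\<sigma>\<in>\<Sigma>. cf \<Sigma> \<alpha> \<sigma> \<in> \<int>) \<and> ((\<forall>\<sigma>\<in>\<Sigma>. cf \<Sigma> \<alpha> \<sigma> \<ge> 0) \<or> (\<forall>\<sigma>\<in>\<Sigma>. cf \<Sigma> \<alpha> \<sigma> \<le> 0))"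
proof -
  obtain c where c: "\<alpha> = int_comb \<Sigma> c" "(\<forall>\<sigma>\<in>\<Sigma>. c \<sigma> \<ge> 0) \<or> (\<forall>\<sigma>\<in>\<Sigma>. c \<sigma> \<le> 0)"
    using rbD(4)[OF rb a] by blast
  have "\<forall>\<sigma>\<in>\<Sigma>. cf \<Sigma> \<alpha> \<sigma> = of_int (c \<sigma>)"
    using cf_eq[OF rbD(3)[OF rb] rbD(2)[OF rb]] c(1) by (simp add: int_comb_real)
  then show ?thesis using c(2) by auto
qed

lemma cf_add:
  fixes B :: "'a::euclidean_space set"
  assumes "finite B" "independent B" "x \<in> span B" "y \<in> span B" "b \<in> B"
  shows "cf B (x + y) b = cf B x b + cf B y b"
proof -
  have "x + y = (\<Sum>b\<in>B. (cf B x b + cf B y b) *\<^sub>R b)"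
    using cf_span[OF assms(1,3)] cf_span[OF assms(1,4)] by (simp add: scaleR_add_left sum.distrib)
  from cf_eq[OF assms(1,2) this assms(5)] show ?thesis by simp
qed

lemma cf_diff:
  fixes B :: "'a::euclidean_space set"
  assumes "finite B" "independent B" "x \<in> span B" "y \<in> span B" "b \<in> B"
  shows "cf B (x - y) b = cf B x b - cf B y b"
proof -
  have "x - y = (\<Sum>b\<in>B. (cf B x b - cf B y b) *\<^sub>R b)"
    using cf_span[OF assms(1,3)] cf_span[OF assms(1,4)] by (simp add: scaleR_diff_left sum_subtractf)
  from cf_eq[OF assms(1,2) this assms(5)] show ?thesis by simp
qed

lemma cf_neg:
  fixes B :: "'a::euclidean_space set"
  assumes "finite B" "independent B" "x \<in> span B" "b \<in> B"
  shows "cf B (- x) b = - cf B x b"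
proof -
  have "- x = (\<Sum>b\<in>B. (- cf B x b) *\<^sub>R b)"
    using cf_span[OF assms(1,3)] by (simp add: sum_negf)
  from cf_eq[OF assms(1,2) this assms(4)] show ?thesis by simp
qed

lemma cf_base:
  fixes B :: "'a::euclidean_space set"
  assumes "finite B" "independent B" "t \<in> B" "b \<in> B"
  shows "cf B t b = (if b = t then 1 else 0)"
  using cf_eq[OF assms(1,2) delta_comb[OF assms(1,3), symmetric] assms(4)] .

lemma cf_inj:
  fixes B :: "'a::euclidean_space set"
  assumes "finite B" "x \<in> span B" "y \<in> span B" "\<forall>b\<in>B. cf B x b = cf B y b"
  shows "x = y"
  using cf_span[OF assms(1,2)] cf_span[OF assms(1,3)] assms(4) by (metis (no_types, lifting) sum.cong)

lemma inner_expand: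
  fixes B :: "'a::euclidean_space set"
  assumes "finite B" "x \<in> span B"
  shows "x \<bullet> y = (\<Sum>b\<in>B. cf B x b * (b \<bullet> y))"
proof -
  have "x \<bullet> y = (\<Sum>b\<in>B. cf B x b *\<^sub>R b) \<bullet> y" using cf_span[OF assms] by simp
  also have "\<dots> = (\<Sum>b\<in>B. cf B x b * (b \<bullet> y))" by (simp add: inner_sum_left)
  finally show ?thesis .
qed

lemma F3:
  assumes rs: "root_system \<Delta>" and rb: "root_base \<Delta> \<Sigma>" and st: "\<sigma> \<in> \<Sigma>" "\<tau> \<in> \<Sigma>" "\<sigma> \<noteq> \<tau>"
  shows "\<sigma> \<bullet> \<tau> \<le> 0"
proof (rule ccontr)
  assume "\<not> ?thesis"
  then have "\<sigma> \<bullet> \<tau> > 0" by simp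
  moreover have "\<sigma> \<in> \<Delta>" "\<tau> \<in> \<Delta>" using rbD(1)[OF rb] st by auto
  ultimately have "\<sigma> - \<tau> \<in> \<Delta>" using F2[OF rs] st(3) by blast
  note cr = cf_root[OF rb this]
  have fi: "finite \<Sigma>" "independent \<Sigma>" using rbD[OF rb] by auto
  have sp: "\<sigma> \<in> span \<Sigma>" "\<tau> \<in> span \<Sigma>" using st span_base by auto
  have "cf \<Sigma> (\<sigma> - \<tau>) \<sigma> = 1" "cf \<Sigma> (\<sigma> - \<tau>) \<tau> = -1"
    using cf_diff[OF fi sp] cf_base[OF fi] st by auto
  then show False using cr st by force
qed



lemma int_pos_ge1: "(x::real) \<in> \<int> \<Longrightarrow> x > 0 \<Longrightarrow> x \<ge> 1"
  by (metis Ints_cases of_int_0_less_iff of_int_1_le_iff int_one_le_iff_zero_less)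

definition inbox :: "'a set \<Rightarrow> ('a \<Rightarrow> real) \<Rightarrow> ('a \<Rightarrow> real) \<Rightarrow> 'a::euclidean_space \<Rightarrow> bool" where
  "inbox \<Sigma> lo hi x \<longleftrightarrow> (\<forall>\<sigma>\<in>\<Sigma>. lo \<sigma> \<le> cf \<Sigma> x \<sigma> \<and> cf \<Sigma> x \<sigma> \<le> hi \<sigma>)"

definition cdist :: "'a set \<Rightarrow> 'a \<Rightarrow> 'a::euclidean_space \<Rightarrow> real" where
  "cdist \<Sigma> x y = (\<Sum>\<sigma>\<in>\<Sigma>. \<bar>cf \<Sigma> x \<sigma> - cf \<Sigma> y \<sigma>\<bar>)"

lemma cdist_sym: "cdist \<Sigma> x y = cdist \<Sigma> y x"
  unfolding cdist_def by (simp add: abs_minus_commute)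

lemma cdist_nonneg: "cdist \<Sigma> x y \<ge> 0"
  unfolding cdist_def by (simp add: sum_nonneg)

lemma cdist_step:
  fixes \<Sigma> :: "'a::euclidean_space set"
  assumes fi: "finite \<Sigma>" "independent \<Sigma>" and sp: "x \<in> span \<Sigma>" "y \<in> span \<Sigma>" "\<sigma> \<in> \<Sigma>"
    and d: "cf \<Sigma> x \<sigma> - cf \<Sigma> y \<sigma> \<ge> 1"
  shows "cdist \<Sigma> (x - \<sigma>) y = cdist \<Sigma> x y - 1" "cdist \<Sigma> x (y + \<sigma>) = cdist \<Sigma> x y - 1"
proof -
  have ss: "\<sigma> \<in> span \<Sigma>" using sp(3) span_base by blast
  have c1: "\<forall>\<rho>\<in>\<Sigma>. cf \<Sigma> (x - \<sigma>) \<rho> = cf \<Sigma> x \<rho> - (if \<rho> = \<sigma> then 1 else 0)"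
    using cf_diff[OF fi sp(1) ss] cf_base[OF fi sp(3)] by simp
  have c2: "\<forall>\<rho>\<in>\<Sigma>. cf \<Sigma> (y + \<sigma>) \<rho> = cf \<Sigma> y \<rho> + (if \<rho> = \<sigma> then 1 else 0)"
    using cf_add[OF fi sp(2) ss] cf_base[OF fi sp(3)] by simp
  have e: "\<forall>\<rho>\<in>\<Sigma>. \<bar>cf \<Sigma> x \<rho> - (if \<rho> = \<sigma> then 1 else 0) - cf \<Sigma> y \<rho>\<bar>
              = \<bar>cf \<Sigma> x \<rho> - cf \<Sigma> y \<rho>\<bar> - (if \<rho> = \<sigma> then 1 else 0)"
    using d by auto
  have "cdist \<Sigma> (x - \<sigma>) y = (\<Sum>\<rho>\<in>\<Sigma>. \<bar>cf \<Sigma> x \<rho> - cf \<Sigma> y \<rho>\<bar> - (if \<rho> = \<sigma> then 1 else 0))"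
    unfolding cdist_def using c1 e by (intro sum.cong) auto
  also have "\<dots> = cdist \<Sigma> x y - 1"
    unfolding cdist_def using fi(1) sp(3) by (simp add: sum_subtractf)
  finally show "cdist \<Sigma> (x - \<sigma>) y = cdist \<Sigma> x y - 1" .
  have "cdist \<Sigma> x (y + \<sigma>) = (\<Sum>\<rho>\<in>\<Sigma>. \<bar>cf \<Sigma> x \<rho> - cf \<Sigma> y \<rho>\<bar> - (if \<rho> = \<sigma> then 1 else 0))"
    unfolding cdist_def using c2 e by (intro sum.cong) (auto simp: algebra_simps)
  also have "\<dots> = cdist \<Sigma> x y - 1"
    unfolding cdist_def using fi(1) sp(3) by (simp add: sum_subtractf)
  finally show "cdist \<Sigma> x (y + \<sigma>) = cdist \<Sigma> x y - 1" .
qed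

lemma MOVE:
  assumes rs: "root_system \<Delta>" and rb: "root_base \<Delta> \<Sigma>"
    and \<tau>: "\<tau> \<in> \<Sigma>" "lo \<tau> > 0"
    and xy: "x \<in> \<Delta>" "y \<in> \<Delta>" "inbox \<Sigma> lo hi x" "inbox \<Sigma> lo hi y"
    and \<sigma>: "\<sigma> \<in> \<Sigma>" "cf \<Sigma> x \<sigma> - cf \<Sigma> y \<sigma> \<ge> 1" "(x - y) \<bullet> \<sigma> > 0"
  shows "(x - \<sigma> \<in> \<Delta> \<and> inbox \<Sigma> lo hi (x - \<sigma>) \<and> cdist \<Sigma> (x - \<sigma>) y = cdist \<Sigma> x y - 1) \<or>
         (y + \<sigma> \<in> \<Delta> \<and> inbox \<Sigma> lo hi (y + \<sigma>) \<and> cdist \<Sigma> x (y + \<sigma>) = cdist \<Sigma> x y - 1)"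
proof -
  have fi: "finite \<Sigma>" "independent \<Sigma>" using rbD[OF rb] by auto
  have sp: "x \<in> span \<Sigma>" "y \<in> span \<Sigma>" using xy rb_span[OF rb] by auto
  have ss: "\<sigma> \<in> span \<Sigma>" using \<sigma>(1) span_base by blast
  have sD: "\<sigma> \<in> \<Delta>" using \<sigma>(1) rbD(1)[OF rb] by auto
  note cd = cdist_step[OF fi sp \<sigma>(1,2)]
  have xt: "cf \<Sigma> x \<tau> > 0" "cf \<Sigma> y \<tau> > 0" using xy(3,4) \<tau> unfolding inbox_def by force+
  have yint: "cf \<Sigma> y \<tau> \<in> \<int>" using cf_root[OF rb xy(2)] \<tau>(1) by blast
  have "x \<bullet> \<sigma> > y \<bullet> \<sigma>" using \<sigma>(3) by (simp add: inner_diff_left)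
  then consider "x \<bullet> \<sigma> > 0" | "y \<bullet> \<sigma> < 0" by linarith
  then show ?thesis
  proof cases
    case 1
    have "x \<noteq> \<sigma>"
    proof
      assume xs: "x = \<sigma>"
      then have "\<tau> = \<sigma>" using xt(1) cf_base[OF fi \<sigma>(1) \<tau>(1)] by (auto split: if_splits)
      then have "cf \<Sigma> x \<sigma> = 1" using xs cf_base[OF fi \<sigma>(1) \<sigma>(1)] by simp
      then have "cf \<Sigma> y \<tau> \<le> 0" using \<sigma>(2) \<open>\<tau> = \<sigma>\<close> by simp
      then show False using xt(2) by simp
    qed
    then have m: "x - \<sigma> \<in> \<Delta>" using F2[OF rs xy(1) sD 1] by blast
    have "inbox \<Sigma> lo hi (x - \<sigma>)"
      unfolding inbox_def
    proof
      fix \<rho> assume r: "\<rho> \<in> \<Sigma>"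
      have "cf \<Sigma> (x - \<sigma>) \<rho> = cf \<Sigma> x \<rho> - (if \<rho> = \<sigma> then 1 else 0)"
        using cf_diff[OF fi sp(1) ss r] cf_base[OF fi \<sigma>(1) r] by simp
      then show "lo \<rho> \<le> cf \<Sigma> (x - \<sigma>) \<rho> \<and> cf \<Sigma> (x - \<sigma>) \<rho> \<le> hi \<rho>"
        using xy(3,4) r \<sigma>(2) unfolding inbox_def by force
    qed
    then show ?thesis using m cd(1) by blast
  next
    case 2
    have "y \<noteq> - \<sigma>"
    proof
      assume "y = - \<sigma>"
      then have "cf \<Sigma> y \<tau> = - cf \<Sigma> \<sigma> \<tau>" using cf_neg[OF fi ss \<tau>(1)] by simp
      then have "cf \<Sigma> y \<tau> \<le> 0" using cf_base[OF fi \<sigma>(1) \<tau>(1)] by simp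
      then show False using xt(2) by simp
    qed
    then have m: "y + \<sigma> \<in> \<Delta>" using F1[OF rs xy(2) sD 2] by blast
    have "inbox \<Sigma> lo hi (y + \<sigma>)"
      unfolding inbox_def
    proof
      fix \<rho> assume r: "\<rho> \<in> \<Sigma>"
      have "cf \<Sigma> (y + \<sigma>) \<rho> = cf \<Sigma> y \<rho> + (if \<rho> = \<sigma> then 1 else 0)"
        using cf_add[OF fi sp(2) ss r] cf_base[OF fi \<sigma>(1) r] by simp
      then show "lo \<rho> \<le> cf \<Sigma> (y + \<sigma>) \<rho> \<and> cf \<Sigma> (y + \<sigma>) \<rho> \<le> hi \<rho>"
        using xy(3,4) r \<sigma>(2) unfolding inbox_def by force
    qed
    then show ?thesis using m cd(2) by blast
  qed
qed

lemma find_sigma: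
  assumes rs: "root_system \<Delta>" and rb: "root_base \<Delta> \<Sigma>"
    and xy: "x \<in> \<Delta>" "y \<in> \<Delta>" "x \<noteq> y"
  shows "\<exists>\<sigma>\<in>\<Sigma>. (cf \<Sigma> x \<sigma> - cf \<Sigma> y \<sigma> \<ge> 1 \<and> (x - y) \<bullet> \<sigma> > 0) \<or>
                (cf \<Sigma> y \<sigma> - cf \<Sigma> x \<sigma> \<ge> 1 \<and> (y - x) \<bullet> \<sigma> > 0)"
proof -
  have fi: "finite \<Sigma>" "independent \<Sigma>" using rbD[OF rb] by auto
  have sp: "x \<in> span \<Sigma>" "y \<in> span \<Sigma>" using xy rb_span[OF rb] by auto
  have sg: "x - y \<in> span \<Sigma>" using sp span_diff by blast
  have "(x - y) \<bullet> (x - y) > 0" using xy(3) by simp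
  then have "(\<Sum>\<sigma>\<in>\<Sigma>. cf \<Sigma> (x - y) \<sigma> * (\<sigma> \<bullet> (x - y))) > 0"
    using inner_expand[OF fi(1) sg] by simp
  then obtain \<sigma> where s: "\<sigma> \<in> \<Sigma>" "cf \<Sigma> (x - y) \<sigma> * (\<sigma> \<bullet> (x - y)) > 0"
    by (metis (no_types, lifting) leD sum_nonpos not_le_imp_less)
  have d: "cf \<Sigma> (x - y) \<sigma> = cf \<Sigma> x \<sigma> - cf \<Sigma> y \<sigma>" using cf_diff[OF fi sp s(1)] .
  have ix: "cf \<Sigma> x \<sigma> \<in> \<int>" "cf \<Sigma> y \<sigma> \<in> \<int>" using cf_root[OF rb] xy s(1) by blast+
  have di: "cf \<Sigma> x \<sigma> - cf \<Sigma> y \<sigma> \<in> \<int>" "cf \<Sigma> y \<sigma> - cf \<Sigma> x \<sigma> \<in> \<int>" using ix by auto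
  from s(2) consider "cf \<Sigma> (x - y) \<sigma> > 0" "\<sigma> \<bullet> (x - y) > 0" | "cf \<Sigma> (x - y) \<sigma> < 0" "\<sigma> \<bullet> (x - y) < 0"
    by (metis zero_less_mult_iff)
  then show ?thesis
  proof cases
    case 1
    then have "cf \<Sigma> x \<sigma> - cf \<Sigma> y \<sigma> \<ge> 1" using int_pos_ge1[OF di(1)] d by simp
    then show ?thesis using s(1) 1(2) by (auto simp: inner_commute)
  next
    case 2
    then have "cf \<Sigma> y \<sigma> - cf \<Sigma> x \<sigma> \<ge> 1" using int_pos_ge1[OF di(2)] d by simp
    moreover have "(y - x) \<bullet> \<sigma> > 0" using 2(2) by (simp add: inner_commute inner_diff_left inner_diff_right)
    ultimately show ?thesis using s(1) by blast
  qed
qed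

lemma CL_n:
  assumes rs: "root_system \<Delta>" and rb: "root_base \<Delta> \<Sigma>"
    and \<tau>: "\<tau> \<in> \<Sigma>" "lo \<tau> > 0"
    and step: "\<And>\<gamma> \<sigma>. \<gamma> \<in> \<Delta> \<Longrightarrow> \<gamma> + \<sigma> \<in> \<Delta> \<Longrightarrow> inbox \<Sigma> lo hi \<gamma> \<Longrightarrow> inbox \<Sigma> lo hi (\<gamma> + \<sigma>)
        \<Longrightarrow> \<sigma> \<in> \<Sigma> \<Longrightarrow> P \<gamma> = P (\<gamma> + \<sigma>)"
  shows "\<forall>x y. x \<in> \<Delta> \<longrightarrow> y \<in> \<Delta> \<longrightarrow> inbox \<Sigma> lo hi x \<longrightarrow> inbox \<Sigma> lo hi y \<longrightarrow>
            cdist \<Sigma> x y \<le> real n \<longrightarrow> P x = P y"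
proof (induction n)
  case 0
  have fi: "finite \<Sigma>" "independent \<Sigma>" using rbD[OF rb] by auto
  show ?case
  proof (intro allI impI)
    fix x y assume h: "x \<in> \<Delta>" "y \<in> \<Delta>" "inbox \<Sigma> lo hi x" "inbox \<Sigma> lo hi y" "cdist \<Sigma> x y \<le> real 0"
    then have "cdist \<Sigma> x y = 0" using cdist_nonneg[of \<Sigma> x y] by simp
    then have "\<forall>\<sigma>\<in>\<Sigma>. \<bar>cf \<Sigma> x \<sigma> - cf \<Sigma> y \<sigma>\<bar> = 0"
      unfolding cdist_def using sum_nonneg_eq_0_iff[OF fi(1), of "\<lambda>\<sigma>. \<bar>cf \<Sigma> x \<sigma> - cf \<Sigma> y \<sigma>\<bar>"] by simp
    then have "x = y" using cf_inj[OF fi(1)] h(1,2) rb_span[OF rb] by simp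
    then show "P x = P y" by simp
  qed
next
  case (Suc n)
  show ?case
  proof (intro allI impI)
    fix x y assume h: "x \<in> \<Delta>" "y \<in> \<Delta>" "inbox \<Sigma> lo hi x" "inbox \<Sigma> lo hi y" "cdist \<Sigma> x y \<le> real (Suc n)"
    show "P x = P y"
    proof (cases "x = y")
      case True then show ?thesis by simp
    next
      case False
      have gen: "P u = P v" if u: "u \<in> \<Delta>" "v \<in> \<Delta>" "inbox \<Sigma> lo hi u" "inbox \<Sigma> lo hi v"
        "cdist \<Sigma> u v \<le> real (Suc n)" "\<sigma> \<in> \<Sigma>" "cf \<Sigma> u \<sigma> - cf \<Sigma> v \<sigma> \<ge> 1" "(u - v) \<bullet> \<sigma> > 0" for u v \<sigma>
      proof -
        from MOVE[OF rs rb \<tau> u(1-4) u(6-8)]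
        consider "u - \<sigma> \<in> \<Delta>" "inbox \<Sigma> lo hi (u - \<sigma>)" "cdist \<Sigma> (u - \<sigma>) v = cdist \<Sigma> u v - 1"
          | "v + \<sigma> \<in> \<Delta>" "inbox \<Sigma> lo hi (v + \<sigma>)" "cdist \<Sigma> u (v + \<sigma>) = cdist \<Sigma> u v - 1" by blast
        then show ?thesis
        proof cases
          case 1
          have "P (u - \<sigma>) = P ((u - \<sigma>) + \<sigma>)" using step[of "u - \<sigma>" \<sigma>] 1 u by simp
          moreover have "P (u - \<sigma>) = P v" using Suc.IH 1 u by auto
          ultimately show ?thesis by simp
        next
          case 2
          have "P v = P (v + \<sigma>)" using step[of v \<sigma>] 2 u by simp
          moreover have "P u = P (v + \<sigma>)" using Suc.IH 2 u by auto
          ultimately show ?thesis by simp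
        qed
      qed
      from find_sigma[OF rs rb h(1,2) False] obtain \<sigma> where s: "\<sigma> \<in> \<Sigma>" and
        dd: "(cf \<Sigma> x \<sigma> - cf \<Sigma> y \<sigma> \<ge> 1 \<and> (x - y) \<bullet> \<sigma> > 0) \<or> (cf \<Sigma> y \<sigma> - cf \<Sigma> x \<sigma> \<ge> 1 \<and> (y - x) \<bullet> \<sigma> > 0)"
        by blast
      have cs: "cdist \<Sigma> y x \<le> real (Suc n)" using h(5) cdist_sym[of \<Sigma> x y] by simp
      from dd show ?thesis
      proof
        assume c: "cf \<Sigma> x \<sigma> - cf \<Sigma> y \<sigma> \<ge> 1 \<and> (x - y) \<bullet> \<sigma> > 0"
        show ?thesis by (rule gen[of x y \<sigma>]) (use h s c in auto)
      next
        assume c: "cf \<Sigma> y \<sigma> - cf \<Sigma> x \<sigma> \<ge> 1 \<and> (y - x) \<bullet> \<sigma> > 0"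
        have "P y = P x" by (rule gen[of y x \<sigma>]) (use h s c cs in auto)
        then show ?thesis by simp
      qed
    qed
  qed
qed

lemma CL:
  assumes rs: "root_system \<Delta>" and rb: "root_base \<Delta> \<Sigma>"
    and \<tau>: "\<tau> \<in> \<Sigma>" "lo \<tau> > 0"
    and step: "\<And>\<gamma> \<sigma>. \<gamma> \<in> \<Delta> \<Longrightarrow> \<gamma> + \<sigma> \<in> \<Delta> \<Longrightarrow> inbox \<Sigma> lo hi \<gamma> \<Longrightarrow> inbox \<Sigma> lo hi (\<gamma> + \<sigma>)
        \<Longrightarrow> \<sigma> \<in> \<Sigma> \<Longrightarrow> P \<gamma> = P (\<gamma> + \<sigma>)"
    and xy: "x \<in> \<Delta>" "y \<in> \<Delta>" "inbox \<Sigma> lo hi x" "inbox \<Sigma> lo hi y"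
  shows "P x = P y"
proof -
  define n where "n = nat \<lceil>cdist \<Sigma> x y\<rceil>"
  have n: "cdist \<Sigma> x y \<le> real n" unfolding n_def by linarith
  have "\<forall>x y. x \<in> \<Delta> \<longrightarrow> y \<in> \<Delta> \<longrightarrow> inbox \<Sigma> lo hi x \<longrightarrow> inbox \<Sigma> lo hi y \<longrightarrow>
            cdist \<Sigma> x y \<le> real n \<longrightarrow> P x = P y"
    by (rule CL_n[where lo=lo, OF rs rb \<tau>]) (rule step, assumption+)
  then show ?thesis using n xy by blast
qed



definition posr :: "'a set \<Rightarrow> 'a set \<Rightarrow> 'a::euclidean_space \<Rightarrow> bool" where
  "posr \<Delta> \<Sigma> x \<longleftrightarrow> x \<in> \<Delta> \<and> (\<forall>\<sigma>\<in>\<Sigma>. cf \<Sigma> x \<sigma> \<ge> 0)"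

definition ht :: "'a set \<Rightarrow> 'a::euclidean_space \<Rightarrow> real" where
  "ht \<Sigma> x = (\<Sum>\<sigma>\<in>\<Sigma>. cf \<Sigma> x \<sigma>)"

lemma cf_plus_base:
  assumes rb: "root_base \<Delta> \<Sigma>" and x: "x \<in> \<Delta>" and s: "\<sigma> \<in> \<Sigma>" "\<rho> \<in> \<Sigma>"
  shows "cf \<Sigma> (x + \<sigma>) \<rho> = cf \<Sigma> x \<rho> + (if \<rho> = \<sigma> then 1 else 0)"
proof -
  have fi: "finite \<Sigma>" "independent \<Sigma>" using rbD[OF rb] by auto
  show ?thesis using cf_add[OF fi rb_span[OF rb x] span_base[OF s(1)] s(2)] cf_base[OF fi s] by simp
qed

lemma ht_plus:
  assumes rb: "root_base \<Delta> \<Sigma>" and x: "x \<in> \<Delta>" and s: "\<sigma> \<in> \<Sigma>"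
  shows "ht \<Sigma> (x + \<sigma>) = ht \<Sigma> x + 1"
proof -
  have fi: "finite \<Sigma>" using rbD[OF rb] by auto
  have "ht \<Sigma> (x + \<sigma>) = (\<Sum>\<rho>\<in>\<Sigma>. cf \<Sigma> x \<rho> + (if \<rho> = \<sigma> then 1 else 0))"
    unfolding ht_def using cf_plus_base[OF rb x s] by (intro sum.cong) auto
  also have "\<dots> = ht \<Sigma> x + 1" unfolding ht_def using fi s by (simp add: sum.distrib)
  finally show ?thesis .
qed

definition closedA :: "'a set \<Rightarrow> 'a set \<Rightarrow> 'a::euclidean_space \<Rightarrow> bool" where
  "closedA \<Sigma> A x \<longleftrightarrow> (\<forall>\<sigma>\<in>\<Sigma>-A. \<forall>\<rho>\<in>\<Sigma>. cf \<Sigma> x \<rho> > 0 \<longrightarrow> \<rho> \<bullet> \<sigma> < 0 \<longrightarrow> cf \<Sigma> x \<sigma> > 0)"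

lemma up_step:
  assumes rs: "root_system \<Delta>" and rb: "root_base \<Delta> \<Sigma>"
    and p: "posr \<Delta> \<Sigma> x" and s: "\<sigma> \<in> \<Sigma>" "\<rho> \<in> \<Sigma>" "cf \<Sigma> x \<rho> > 0" "\<rho> \<bullet> \<sigma> < 0" "\<not> cf \<Sigma> x \<sigma> > 0"
  shows "x + \<sigma> \<in> \<Delta>" "posr \<Delta> \<Sigma> (x + \<sigma>)"
proof -
  have fi: "finite \<Sigma>" "independent \<Sigma>" using rbD[OF rb] by auto
  have xD: "x \<in> \<Delta>" and xp: "\<forall>\<sigma>\<in>\<Sigma>. cf \<Sigma> x \<sigma> \<ge> 0" using p unfolding posr_def by auto
  have c0: "cf \<Sigma> x \<sigma> = 0" using xp s(1,5) by force
  have rs': "\<rho> \<noteq> \<sigma>" using s(3) c0 by auto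
  have terms: "\<forall>\<rho>'\<in>\<Sigma>. cf \<Sigma> x \<rho>' * (\<rho>' \<bullet> \<sigma>) \<le> 0"
  proof
    fix \<rho>' assume r: "\<rho>' \<in> \<Sigma>"
    show "cf \<Sigma> x \<rho>' * (\<rho>' \<bullet> \<sigma>) \<le> 0"
    proof (cases "\<rho>' = \<sigma>")
      case True then show ?thesis using c0 by simp
    next
      case False
      then have "\<rho>' \<bullet> \<sigma> \<le> 0" using F3[OF rs rb r s(1)] by simp
      then show ?thesis using xp r by (simp add: mult_nonneg_nonpos)
    qed
  qed
  have neg: "cf \<Sigma> x \<rho> * (\<rho> \<bullet> \<sigma>) < 0" using s(3,4) by (simp add: mult_pos_neg)
  have "x \<bullet> \<sigma> = (\<Sum>\<rho>'\<in>\<Sigma>. cf \<Sigma> x \<rho>' * (\<rho>' \<bullet> \<sigma>))" using inner_expand[OF fi(1) rb_span[OF rb xD]] .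
  also have "\<dots> = cf \<Sigma> x \<rho> * (\<rho> \<bullet> \<sigma>) + (\<Sum>\<rho>'\<in>\<Sigma>-{\<rho>}. cf \<Sigma> x \<rho>' * (\<rho>' \<bullet> \<sigma>))"
    using fi(1) s(2) by (simp add: sum.remove)
  also have "\<dots> < 0" using neg terms by (smt (verit) Diff_subset subsetD sum_nonpos)
  finally have ip: "x \<bullet> \<sigma> < 0" .
  have "x \<noteq> - \<sigma>"
  proof
    assume "x = - \<sigma>"
    then have "cf \<Sigma> x \<sigma> = - cf \<Sigma> \<sigma> \<sigma>" using cf_neg[OF fi span_base[OF s(1)] s(1)] by simp
    then show False using c0 cf_base[OF fi s(1) s(1)] by simp
  qed
  then show xs: "x + \<sigma> \<in> \<Delta>" using F1[OF rs xD _ ip] rbD(1)[OF rb] s(1) by blast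
  show "posr \<Delta> \<Sigma> (x + \<sigma>)" unfolding posr_def using xs cf_plus_base[OF rb xD s(1)] xp by auto
qed

lemma SAT:
  assumes rs: "root_system \<Delta>" and rb: "root_base \<Delta> \<Sigma>" and a0: "a0 \<in> \<Sigma>"
    and H1: "\<And>\<gamma> \<sigma>. posr \<Delta> \<Sigma> \<gamma> \<Longrightarrow> posr \<Delta> \<Sigma> (\<gamma> + \<sigma>) \<Longrightarrow> \<sigma> \<in> \<Sigma> - A \<Longrightarrow> cf \<Sigma> \<gamma> a0 > 0 \<Longrightarrow> g \<gamma> = g (\<gamma> + \<sigma>)"
  shows "\<forall>x. card {y\<in>\<Delta>. ht \<Sigma> y > ht \<Sigma> x} = n \<longrightarrow> posr \<Delta> \<Sigma> x \<longrightarrow> cf \<Sigma> x a0 > 0 \<longrightarrow>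
    (\<exists>z. posr \<Delta> \<Sigma> z \<and> cf \<Sigma> z a0 > 0 \<and> g z = g x \<and> closedA \<Sigma> A z)"
proof (induction n rule: less_induct)
  case (less n)
  show ?case
  proof (intro allI impI)
    fix x assume h: "card {y\<in>\<Delta>. ht \<Sigma> y > ht \<Sigma> x} = n" "posr \<Delta> \<Sigma> x" "cf \<Sigma> x a0 > 0"
    show "\<exists>z. posr \<Delta> \<Sigma> z \<and> cf \<Sigma> z a0 > 0 \<and> g z = g x \<and> closedA \<Sigma> A z"
    proof (cases "closedA \<Sigma> A x")
      case True then show ?thesis using h by blast
    next
      case False
      then obtain \<sigma> \<rho> where s: "\<sigma> \<in> \<Sigma> - A" "\<rho> \<in> \<Sigma>" "cf \<Sigma> x \<rho> > 0" "\<rho> \<bullet> \<sigma> < 0" "\<not> cf \<Sigma> x \<sigma> > 0"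
        unfolding closedA_def by blast
      have s1: "\<sigma> \<in> \<Sigma>" using s(1) by blast
      note us = up_step[OF rs rb h(2) s1 s(2-5)]
      have xD: "x \<in> \<Delta>" using h(2) unfolding posr_def by blast
      have a0': "cf \<Sigma> (x + \<sigma>) a0 > 0" using cf_plus_base[OF rb xD s1 a0] h(3) by (cases "a0 = \<sigma>") auto
      have geq: "g x = g (x + \<sigma>)" using H1[OF h(2) us(2) s(1) h(3)] .
      have htp: "ht \<Sigma> (x + \<sigma>) = ht \<Sigma> x + 1" using ht_plus[OF rb xD s1] .
      have fD: "finite \<Delta>" using rsD(1)[OF rs] .
      have sub1: "{y\<in>\<Delta>. ht \<Sigma> y > ht \<Sigma> (x + \<sigma>)} \<subseteq> {y\<in>\<Delta>. ht \<Sigma> y > ht \<Sigma> x}"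
        unfolding htp by (intro Collect_mono) auto
      have m1: "x + \<sigma> \<in> {y\<in>\<Delta>. ht \<Sigma> y > ht \<Sigma> x}" using us(1) htp by simp
      have m2: "x + \<sigma> \<notin> {y\<in>\<Delta>. ht \<Sigma> y > ht \<Sigma> (x + \<sigma>)}" by simp
      have sub: "{y\<in>\<Delta>. ht \<Sigma> y > ht \<Sigma> (x + \<sigma>)} \<subset> {y\<in>\<Delta>. ht \<Sigma> y > ht \<Sigma> x}"
        using sub1 m1 m2 by blast
      have "card {y\<in>\<Delta>. ht \<Sigma> y > ht \<Sigma> (x + \<sigma>)} < n"
        using psubset_card_mono[OF _ sub] fD h(1) by simp
      then obtain z where "posr \<Delta> \<Sigma> z \<and> cf \<Sigma> z a0 > 0 \<and> g z = g (x + \<sigma>) \<and> closedA \<Sigma> A z"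
        using less.IH us(2) a0' by blast
      then show ?thesis using geq by auto
    qed
  qed
qed

lemma reach:
  assumes cl: "closedA \<Sigma> A x" and a: "cf \<Sigma> x a0 > 0"
    and p: "(a0, y) \<in> {(u, v). u \<in> \<Sigma> \<and> v \<in> \<Sigma> - A \<and> u \<bullet> v < 0}\<^sup>+"
  shows "cf \<Sigma> x y > 0"
  using p
proof (induction rule: trancl_induct)
  case (base y)
  then show ?case using cl a unfolding closedA_def by blast
next
  case (step y z)
  then show ?case using cl unfolding closedA_def
    by (smt (verit, ccfv_SIG) case_prodD mem_Collect_eq trancl.simps)
qed

lemma Core2:
  assumes rs: "root_system \<Delta>" and rb: "root_base \<Delta> \<Sigma>" and a0: "a0 \<in> \<Sigma>"
    and b: "b \<in> \<Sigma>" "(a0, b) \<in> {(u, v). u \<in> \<Sigma> \<and> v \<in> \<Sigma> - A \<and> u \<bullet> v < 0}\<^sup>+"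
    and H1: "\<And>\<gamma> \<sigma>. posr \<Delta> \<Sigma> \<gamma> \<Longrightarrow> posr \<Delta> \<Sigma> (\<gamma> + \<sigma>) \<Longrightarrow> \<sigma> \<in> \<Sigma> - A \<Longrightarrow> cf \<Sigma> \<gamma> a0 > 0 \<Longrightarrow> g \<gamma> = g (\<gamma> + \<sigma>)"
    and H2: "\<And>\<gamma> \<sigma>. posr \<Delta> \<Sigma> \<gamma> \<Longrightarrow> posr \<Delta> \<Sigma> (\<gamma> + \<sigma>) \<Longrightarrow> \<sigma> \<in> A \<Longrightarrow> cf \<Sigma> \<gamma> a0 > 0 \<Longrightarrow> cf \<Sigma> \<gamma> b > 0
        \<Longrightarrow> g \<gamma> = g (\<gamma> + \<sigma>)"
    and xy: "posr \<Delta> \<Sigma> x" "posr \<Delta> \<Sigma> y" "cf \<Sigma> x a0 > 0" "cf \<Sigma> y a0 > 0"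
  shows "g x = g y"
proof -
  note sat = SAT[OF rs rb a0 H1]
  obtain x' where x': "posr \<Delta> \<Sigma> x'" "cf \<Sigma> x' a0 > 0" "g x' = g x" "closedA \<Sigma> A x'"
    using sat xy(1,3) by blast
  obtain y' where y': "posr \<Delta> \<Sigma> y'" "cf \<Sigma> y' a0 > 0" "g y' = g y" "closedA \<Sigma> A y'"
    using sat xy(2,4) by blast
  have bx: "cf \<Sigma> x' b > 0" using reach[OF x'(4) x'(2) b(2)] .
  have by': "cf \<Sigma> y' b > 0" using reach[OF y'(4) y'(2) b(2)] .
  define lo where "lo = (\<lambda>\<sigma>. min (cf \<Sigma> x' \<sigma>) (cf \<Sigma> y' \<sigma>))"
  define hi where "hi = (\<lambda>\<sigma>. max (cf \<Sigma> x' \<sigma>) (cf \<Sigma> y' \<sigma>))"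
  have lo0: "lo a0 > 0" unfolding lo_def using x'(2) y'(2) by simp
  have ib: "inbox \<Sigma> lo hi x'" "inbox \<Sigma> lo hi y'" unfolding inbox_def lo_def hi_def by auto
  have xD: "x' \<in> \<Delta>" "y' \<in> \<Delta>" using x'(1) y'(1) unfolding posr_def by auto
  have step: "g \<gamma> = g (\<gamma> + \<sigma>)" if st: "\<gamma> \<in> \<Delta>" "\<gamma> + \<sigma> \<in> \<Delta>" "inbox \<Sigma> lo hi \<gamma>" "inbox \<Sigma> lo hi (\<gamma> + \<sigma>)" "\<sigma> \<in> \<Sigma>"
    for \<gamma> \<sigma>
  proof -
    have lonn: "\<forall>\<rho>\<in>\<Sigma>. lo \<rho> \<ge> 0" unfolding lo_def using x'(1) y'(1) unfolding posr_def by auto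
    have p1: "posr \<Delta> \<Sigma> \<gamma>" using st(1,3) lonn unfolding posr_def inbox_def by force
    have p2: "posr \<Delta> \<Sigma> (\<gamma> + \<sigma>)" using st(2,4) lonn unfolding posr_def inbox_def by force
    have ga: "cf \<Sigma> \<gamma> a0 > 0" using st(3) a0 lo0 unfolding inbox_def by force
    have gb: "cf \<Sigma> \<gamma> b > 0" using st(3) b(1) bx by' unfolding inbox_def lo_def by force
    show ?thesis
    proof (cases "\<sigma> \<in> A")
      case True from H2[OF p1 p2 True ga gb] show ?thesis .
    next
      case False then show ?thesis using H1[OF p1 p2 _ ga] st(5) by blast
    qed
  qed
  have "g x' = g y'"
    by (rule CL[where lo=lo and hi=hi, OF rs rb a0 lo0]) (use step xD ib in auto)
  then show ?thesis using x'(3) y'(3) by simp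
qed



definition qd :: "'a::euclidean_space set \<Rightarrow> 'a set \<Rightarrow> 'a set \<Rightarrow> 'a set \<Rightarrow> 'a set \<Rightarrow> bool" where
  "qd \<Delta> \<Sigma> J R S \<longleftrightarrow> root_system \<Delta> \<and> root_base \<Delta> \<Sigma> \<and> J \<subset> \<Sigma> \<and>
     R = perp_proj J ` \<Delta> - {0} \<and> S = perp_proj J ` (\<Sigma> - J)"

lemma qrs_qd: "qrs R S \<Longrightarrow> \<exists>\<Delta> \<Sigma> J. qd \<Delta> \<Sigma> J R S"
  unfolding qrs_def qd_def by blast

lemma qdD:
  assumes "qd \<Delta> \<Sigma> J R S"
  shows "root_system \<Delta>" "root_base \<Delta> \<Sigma>" "J \<subseteq> \<Sigma>" "J \<noteq> \<Sigma>" "R = perp_proj J ` \<Delta> - {0}"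
    "S = perp_proj J ` (\<Sigma> - J)" "finite \<Sigma>" "independent \<Sigma>" "finite S" "independent S"
    "inj_on (perp_proj J) (\<Sigma> - J)"
proof -
  have rb: "root_base \<Delta> \<Sigma>" and JS: "J \<subseteq> \<Sigma>" and S: "S = perp_proj J ` (\<Sigma> - J)"
    using assms unfolding qd_def by auto
  note fi = rbD(3,2)[OF rb]
  show "root_system \<Delta>" "root_base \<Delta> \<Sigma>" "J \<subseteq> \<Sigma>" "J \<noteq> \<Sigma>" "R = perp_proj J ` \<Delta> - {0}"
    "S = perp_proj J ` (\<Sigma> - J)" "finite \<Sigma>" "independent \<Sigma>"
    using assms fi unfolding qd_def by auto
  show "finite S" using S fi by simp
  show "independent S" using quot_base_indep[OF fi JS] S unfolding quot_base_def by simp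
  show "inj_on (perp_proj J) (\<Sigma> - J)" using pp_inj[OF fi JS] .
qed

lemma qd_comb:
  assumes q: "qd \<Delta> \<Sigma> J R S"
  shows "perp_proj J (\<Sum>\<sigma>\<in>\<Sigma>. c \<sigma> *\<^sub>R \<sigma>) = (\<Sum>t\<in>S. c (inv_into (\<Sigma> - J) (perp_proj J) t) *\<^sub>R t)"
  unfolding qdD(6)[OF q] by (rule pp_comb[OF qdD(7,8,3)[OF q]])

lemma qd_expand:
  assumes q: "qd \<Delta> \<Sigma> J R S" and x: "x \<in> span \<Sigma>"
  shows "perp_proj J x = (\<Sum>t\<in>S. cf \<Sigma> x (inv_into (\<Sigma> - J) (perp_proj J) t) *\<^sub>R t)"
proof -
  have e0: "x = (\<Sum>\<sigma>\<in>\<Sigma>. cf \<Sigma> x \<sigma> *\<^sub>R \<sigma>)" by (rule cf_span[OF qdD(7)[OF q] x])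
  show ?thesis using trans[OF arg_cong[OF e0, of "perp_proj J"] qd_comb[OF q, of "cf \<Sigma> x"]] .
qed

lemma qd_cf:
  assumes q: "qd \<Delta> \<Sigma> J R S" and x: "x \<in> span \<Sigma>" and s: "\<sigma> \<in> \<Sigma> - J"
  shows "cf S (perp_proj J x) (perp_proj J \<sigma>) = cf \<Sigma> x \<sigma>"
proof -
  note d = qdD[OF q]
  have e: "perp_proj J x = (\<Sum>t\<in>S. cf \<Sigma> x (inv_into (\<Sigma> - J) (perp_proj J) t) *\<^sub>R t)"
    by (rule qd_expand[OF q x])
  have m: "perp_proj J \<sigma> \<in> S" using s d(6) by blast
  have "cf S (perp_proj J x) (perp_proj J \<sigma>) = cf \<Sigma> x (inv_into (\<Sigma> - J) (perp_proj J) (perp_proj J \<sigma>))"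
    using cf_eq[OF d(9,10) e m] .
  then show ?thesis using inv_into_f_f[OF d(11) s] by simp
qed

lemma qd_span_S:
  assumes q: "qd \<Delta> \<Sigma> J R S" and x: "x \<in> span \<Sigma>"
  shows "perp_proj J x \<in> span S"
  unfolding qd_expand[OF q x] by (rule comb_in_span[OF qdD(9)[OF q]])

lemma qd_span_iff:
  assumes q: "qd \<Delta> \<Sigma> J R S" and x: "x \<in> span \<Sigma>" and T: "T \<subseteq> S"
  shows "perp_proj J x \<in> span T \<longleftrightarrow> (\<forall>\<sigma>\<in>\<Sigma>-J. perp_proj J \<sigma> \<notin> T \<longrightarrow> cf \<Sigma> x \<sigma> = 0)"
proof -
  note d = qdD[OF q]
  have e: "perp_proj J x = (\<Sum>t\<in>S. cf S (perp_proj J x) t *\<^sub>R t)"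
    using cf_span[OF d(9) qd_span_S[OF q x]] .
  have "perp_proj J x \<in> span T \<longleftrightarrow> (\<forall>t\<in>S-T. cf S (perp_proj J x) t = 0)"
    using L_span[OF d(9,10) T, of "cf S (perp_proj J x)"] e by simp
  also have "\<dots> \<longleftrightarrow> (\<forall>\<sigma>\<in>\<Sigma>-J. perp_proj J \<sigma> \<notin> T \<longrightarrow> cf \<Sigma> x \<sigma> = 0)"
  proof
    assume h: "\<forall>t\<in>S-T. cf S (perp_proj J x) t = 0"
    show "\<forall>\<sigma>\<in>\<Sigma>-J. perp_proj J \<sigma> \<notin> T \<longrightarrow> cf \<Sigma> x \<sigma> = 0"
    proof (intro ballI impI)
      fix \<sigma> assume s: "\<sigma> \<in> \<Sigma>-J" "perp_proj J \<sigma> \<notin> T"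
      then have "perp_proj J \<sigma> \<in> S - T" using d(6) by blast
      then have "cf S (perp_proj J x) (perp_proj J \<sigma>) = 0" using h by blast
      then show "cf \<Sigma> x \<sigma> = 0" using qd_cf[OF q x s(1)] by simp
    qed
  next
    assume h: "\<forall>\<sigma>\<in>\<Sigma>-J. perp_proj J \<sigma> \<notin> T \<longrightarrow> cf \<Sigma> x \<sigma> = 0"
    show "\<forall>t\<in>S-T. cf S (perp_proj J x) t = 0"
    proof
      fix t assume t: "t \<in> S - T"
      then obtain \<sigma> where s: "\<sigma> \<in> \<Sigma> - J" "t = perp_proj J \<sigma>" using d(6) by blast
      then have "cf \<Sigma> x \<sigma> = 0" using h t by blast
      then show "cf S (perp_proj J x) t = 0" using qd_cf[OF q x s(1)] s(2) by simp
    qed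
  qed
  finally show ?thesis .
qed

lemma qd_good:
  assumes q: "qd \<Delta> \<Sigma> J R S"
  shows "good R S"
proof -
  note d = qdD[OF q]
  have "\<exists>c. \<alpha> = int_comb S c \<and> ((\<forall>s\<in>S. c s \<ge> 0) \<or> (\<forall>s\<in>S. c s \<le> 0))" if a: "\<alpha> \<in> R" for \<alpha>
  proof -
    obtain \<delta> where \<delta>: "\<delta> \<in> \<Delta>" "\<alpha> = perp_proj J \<delta>" using a d(5) by blast
    obtain c where c: "\<delta> = int_comb \<Sigma> c" "(\<forall>\<sigma>\<in>\<Sigma>. c \<sigma> \<ge> 0) \<or> (\<forall>\<sigma>\<in>\<Sigma>. c \<sigma> \<le> 0)"
      using rbD(4)[OF d(2) \<delta>(1)] by blast
    let ?c = "\<lambda>t. c (inv_into (\<Sigma> - J) (perp_proj J) t)"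
    have "\<alpha> = int_comb S ?c"
      using \<delta>(2) c(1) qd_comb[OF q, of "\<lambda>\<sigma>. real_of_int (c \<sigma>)"] by (simp add: int_comb_real)
    moreover have "(\<forall>s\<in>S. ?c s \<ge> 0) \<or> (\<forall>s\<in>S. ?c s \<le> 0)"
      using c(2) d(6) inv_into_into[of _ "perp_proj J" "\<Sigma> - J"] by auto
    ultimately show ?thesis by blast
  qed
  then show ?thesis unfolding good_def using d(5,9,10) by auto
qed

lemma qd_lift:
  assumes q: "qd \<Delta> \<Sigma> J R S" and a: "\<alpha> \<in> pos_roots R S"
  shows "\<exists>\<delta>. posr \<Delta> \<Sigma> \<delta> \<and> perp_proj J \<delta> = \<alpha>"
proof -
  note d = qdD[OF q]
  obtain \<delta> where \<delta>: "\<delta> \<in> \<Delta>" "\<alpha> = perp_proj J \<delta>" "\<alpha> \<noteq> 0" using a d(5) unfolding pos_roots_def by blast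
  have sp: "\<delta> \<in> span \<Sigma>" using rb_span[OF d(2) \<delta>(1)] .
  consider "\<forall>\<sigma>\<in>\<Sigma>. cf \<Sigma> \<delta> \<sigma> \<ge> 0" | "\<forall>\<sigma>\<in>\<Sigma>. cf \<Sigma> \<delta> \<sigma> \<le> 0" using cf_root[OF d(2) \<delta>(1)] by blast
  then show ?thesis
  proof cases
    case 1 then show ?thesis using \<delta> unfolding posr_def by blast
  next
    case 2
    obtain c where c: "\<alpha> = int_comb S c" "\<forall>s\<in>S. c s \<ge> 0" using a unfolding pos_roots_def by blast
    have "\<forall>t\<in>S. cf S \<alpha> t = 0"
    proof
      fix t assume t: "t \<in> S"
      then obtain \<sigma> where s: "\<sigma> \<in> \<Sigma> - J" "t = perp_proj J \<sigma>" using d(6) by blast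
      have "cf S \<alpha> t = cf \<Sigma> \<delta> \<sigma>" using qd_cf[OF q sp s(1)] s(2) \<delta>(2) by simp
      moreover have "cf S \<alpha> t = c t" using cf_eq[OF d(9,10) _ t, of \<alpha> "\<lambda>s. real_of_int (c s)"] c(1)
        by (simp add: int_comb_real)
      ultimately show "cf S \<alpha> t = 0" using 2 c(2) s(1) t by force
    qed
    moreover have "\<alpha> = (\<Sum>t\<in>S. cf S \<alpha> t *\<^sub>R t)"
      using cf_span[OF d(9)] qd_span_S[OF q sp] \<delta>(2) by blast
    ultimately have "\<alpha> = 0" by simp
    then show ?thesis using \<delta>(3) by blast
  qed
qed

lemma qd_pos:
  assumes q: "qd \<Delta> \<Sigma> J R S" and p: "posr \<Delta> \<Sigma> \<delta>" and ne: "perp_proj J \<delta> \<noteq> 0"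
  shows "perp_proj J \<delta> \<in> pos_roots R S"
proof -
  note d = qdD[OF q]
  have \<delta>: "\<delta> \<in> \<Delta>" "\<forall>\<sigma>\<in>\<Sigma>. cf \<Sigma> \<delta> \<sigma> \<ge> 0" using p unfolding posr_def by auto
  obtain c where c: "\<delta> = int_comb \<Sigma> c" "(\<forall>\<sigma>\<in>\<Sigma>. c \<sigma> \<ge> 0) \<or> (\<forall>\<sigma>\<in>\<Sigma>. c \<sigma> \<le> 0)"
    using rbD(4)[OF d(2) \<delta>(1)] by blast
  have cc: "\<forall>\<sigma>\<in>\<Sigma>. cf \<Sigma> \<delta> \<sigma> = real_of_int (c \<sigma>)"
    using cf_eq[OF d(7,8)] c(1) by (simp add: int_comb_real)
  let ?c = "\<lambda>t. c (inv_into (\<Sigma> - J) (perp_proj J) t)"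
  have "perp_proj J \<delta> = int_comb S ?c"
    using c(1) qd_comb[OF q, of "\<lambda>\<sigma>. real_of_int (c \<sigma>)"] by (simp add: int_comb_real)
  moreover have "\<forall>s\<in>S. ?c s \<ge> 0"
  proof
    fix s assume "s \<in> S"
    then have "inv_into (\<Sigma> - J) (perp_proj J) s \<in> \<Sigma>" using d(6) inv_into_into[of s "perp_proj J" "\<Sigma> - J"] by auto
    then show "?c s \<ge> 0" using cc \<delta>(2) by force
  qed
  moreover have "perp_proj J \<delta> \<in> R" using d(5) \<delta>(1) ne by blast
  ultimately show ?thesis unfolding pos_roots_def by blast
qed

lemma qd_pp_plus:
  assumes q: "qd \<Delta> \<Sigma> J R S" and s: "\<sigma> \<in> J"
  shows "perp_proj J (x + \<sigma>) = perp_proj J x"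
  using s by (simp add: pp_add pp_span_zero span_base)



lemma posr_span: "root_base \<Delta> \<Sigma> \<Longrightarrow> posr \<Delta> \<Sigma> x \<Longrightarrow> x \<in> span \<Sigma>"
  unfolding posr_def using rb_span by blast

lemma Step1:
  assumes q: "qd \<Delta> \<Sigma> J R S" and K: "K \<subseteq> S" and I: "I \<subseteq> S"
    and HI: "\<And>\<alpha> \<beta>. \<alpha> \<in> pos_roots R S \<Longrightarrow> \<beta> \<in> pos_roots R S \<Longrightarrow> \<alpha> \<notin> span I \<Longrightarrow> \<alpha> - \<beta> \<in> span I \<Longrightarrow> P \<alpha> = P \<beta>"
    and HK: "\<And>\<alpha> \<beta>. \<alpha> \<in> pos_roots R S \<Longrightarrow> \<beta> \<in> pos_roots R S \<Longrightarrow> \<alpha> \<notin> span K \<Longrightarrow> \<alpha> - \<beta> \<in> span K \<Longrightarrow> P \<alpha> = P \<beta>"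
    and a: "\<alpha> \<in> pos_roots R S" "\<beta> \<in> pos_roots R S" "\<alpha> \<notin> span (I \<union> K)" "\<alpha> - \<beta> \<in> span (I \<union> K)"
  shows "P \<alpha> = P \<beta>"
proof -
  note d = qdD[OF q]
  let ?p = "perp_proj J"
  let ?T = "I \<union> K"
  have T: "?T \<subseteq> S" using I K by blast
  obtain \<delta> where \<delta>: "posr \<Delta> \<Sigma> \<delta>" "?p \<delta> = \<alpha>" using qd_lift[OF q a(1)] by blast
  obtain \<epsilon> where \<epsilon>: "posr \<Delta> \<Sigma> \<epsilon>" "?p \<epsilon> = \<beta>" using qd_lift[OF q a(2)] by blast
  have sd: "\<delta> \<in> span \<Sigma>" "\<epsilon> \<in> span \<Sigma>" using posr_span[OF d(2)] \<delta>(1) \<epsilon>(1) by auto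
  have sde: "\<delta> - \<epsilon> \<in> span \<Sigma>" using sd span_diff by blast
  have "?p (\<delta> - \<epsilon>) \<in> span ?T" using a(4) \<delta>(2) \<epsilon>(2) by (simp add: pp_diff)
  then have eqT: "\<forall>\<sigma>\<in>\<Sigma>-J. ?p \<sigma> \<notin> ?T \<longrightarrow> cf \<Sigma> \<delta> \<sigma> = cf \<Sigma> \<epsilon> \<sigma>"
    using qd_span_iff[OF q sde T] cf_diff[OF d(7,8) sd] by force
  obtain \<tau> where \<tau>: "\<tau> \<in> \<Sigma>-J" "?p \<tau> \<notin> ?T" "cf \<Sigma> \<delta> \<tau> \<noteq> 0"
    using a(3) \<delta>(2) qd_span_iff[OF q sd(1) T] by blast
  have \<tau>0: "cf \<Sigma> \<delta> \<tau> > 0" using \<tau> \<delta>(1) unfolding posr_def by force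
  define lo where "lo = (\<lambda>\<sigma>. min (cf \<Sigma> \<delta> \<sigma>) (cf \<Sigma> \<epsilon> \<sigma>))"
  define hi where "hi = (\<lambda>\<sigma>. max (cf \<Sigma> \<delta> \<sigma>) (cf \<Sigma> \<epsilon> \<sigma>))"
  have lo\<tau>: "lo \<tau> > 0" unfolding lo_def using \<tau>0 eqT \<tau> by simp
  have lonn: "\<forall>\<rho>\<in>\<Sigma>. lo \<rho> \<ge> 0" unfolding lo_def using \<delta>(1) \<epsilon>(1) unfolding posr_def by auto
  have ib: "inbox \<Sigma> lo hi \<delta>" "inbox \<Sigma> lo hi \<epsilon>" unfolding inbox_def lo_def hi_def by auto
  have fixT: "cf \<Sigma> \<gamma> \<rho> = cf \<Sigma> \<delta> \<rho>" if "inbox \<Sigma> lo hi \<gamma>" "\<rho> \<in> \<Sigma>-J" "?p \<rho> \<notin> ?T" for \<gamma> \<rho>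
    using that eqT unfolding inbox_def lo_def hi_def by force
  have good_elt: "?p \<gamma> \<in> pos_roots R S \<and> ?p \<gamma> \<notin> span I \<and> ?p \<gamma> \<notin> span K"
    if g: "\<gamma> \<in> \<Delta>" "inbox \<Sigma> lo hi \<gamma>" for \<gamma>
  proof -
    have pg: "posr \<Delta> \<Sigma> \<gamma>" using g lonn unfolding posr_def inbox_def by force
    have sg: "\<gamma> \<in> span \<Sigma>" using posr_span[OF d(2) pg] .
    have "cf \<Sigma> \<gamma> \<tau> \<noteq> 0" using fixT[OF g(2) \<tau>(1,2)] \<tau>(3) by simp
    then have nT: "?p \<gamma> \<notin> span ?T" using qd_span_iff[OF q sg T] \<tau>(1,2) by blast
    then have "?p \<gamma> \<noteq> 0" using span_zero by force
    moreover have "?p \<gamma> \<notin> span I" "?p \<gamma> \<notin> span K"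
      using nT span_mono[of I ?T] span_mono[of K ?T] by blast+
    ultimately show ?thesis using qd_pos[OF q pg] by blast
  qed
  have step: "P (?p \<gamma>) = P (?p (\<gamma> + \<sigma>))"
    if st: "\<gamma> \<in> \<Delta>" "\<gamma> + \<sigma> \<in> \<Delta>" "inbox \<Sigma> lo hi \<gamma>" "inbox \<Sigma> lo hi (\<gamma> + \<sigma>)" "\<sigma> \<in> \<Sigma>" for \<gamma> \<sigma>
  proof (cases "\<sigma> \<in> J")
    case True then show ?thesis using qd_pp_plus[OF q] by simp
  next
    case False
    have s: "\<sigma> \<in> \<Sigma> - J" using False st(5) by blast
    have "?p \<sigma> \<in> ?T"
    proof (rule ccontr)
      assume n: "?p \<sigma> \<notin> ?T"
      have "cf \<Sigma> (\<gamma> + \<sigma>) \<sigma> = cf \<Sigma> \<gamma> \<sigma> + 1" using cf_plus_base[OF d(2) st(1) st(5) st(5)] by simp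
      moreover have "cf \<Sigma> (\<gamma> + \<sigma>) \<sigma> = cf \<Sigma> \<delta> \<sigma>" "cf \<Sigma> \<gamma> \<sigma> = cf \<Sigma> \<delta> \<sigma>"
        using fixT[OF st(4) s n] fixT[OF st(3) s n] by auto
      ultimately show False by simp
    qed
    note g1 = good_elt[OF st(1,3)] and g2 = good_elt[OF st(2,4)]
    have df: "?p (\<gamma> + \<sigma>) - ?p \<gamma> = ?p \<sigma>" by (simp add: pp_add)
    from \<open>?p \<sigma> \<in> ?T\<close> consider "?p \<sigma> \<in> I" | "?p \<sigma> \<in> K" by blast
    then show ?thesis
    proof cases
      case 1
      have "?p (\<gamma> + \<sigma>) - ?p \<gamma> \<in> span I" using df 1 span_base by metis
      then show ?thesis using HI[of "?p (\<gamma> + \<sigma>)" "?p \<gamma>"] g1 g2 by simp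
    next
      case 2
      have "?p (\<gamma> + \<sigma>) - ?p \<gamma> \<in> span K" using df 2 span_base by metis
      then show ?thesis using HK[of "?p (\<gamma> + \<sigma>)" "?p \<gamma>"] g1 g2 by simp
    qed
  qed
  have dD: "\<delta> \<in> \<Delta>" "\<epsilon> \<in> \<Delta>" using \<delta>(1) \<epsilon>(1) unfolding posr_def by auto
  have "P (?p \<delta>) = P (?p \<epsilon>)"
    by (rule CL[where lo=lo and hi=hi and P="\<lambda>\<gamma>. P (?p \<gamma>)", OF d(1,2) _ lo\<tau>])
       (use \<tau>(1) step dD ib in auto)
  then show ?thesis using \<delta>(2) \<epsilon>(2) by simp
qed

lemma span_orth:
  fixes z :: "'a::euclidean_space"
  assumes "w \<in> span A" "\<forall>u\<in>A. u \<bullet> z = 0"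
  shows "w \<bullet> z = 0"
proof -
  have "orthogonal z w"
    using orthogonal_to_span[OF assms(1), of z] assms(2) by (simp add: orthogonal_def inner_commute)
  then show ?thesis by (simp add: orthogonal_def inner_commute)
qed

lemma orth_split:
  fixes x :: "'a::euclidean_space"
  assumes J: "J \<subseteq> U \<union> V" and x: "x \<in> U" and UV: "\<forall>u\<in>U. \<forall>v\<in>V. u \<bullet> v = 0"
  shows "perp_proj J x \<in> span U"
proof -
  let ?q = "perp_proj (J \<inter> U) x"
  have w: "x - ?q \<in> span (J \<inter> U)" by (rule pp_in_span)
  have "perp_proj J x = ?q"
  proof (rule pp_charI)
    show "x - ?q \<in> span J" using w span_mono[of "J \<inter> U" J] by blast
  next
    fix z assume z: "z \<in> span J"
    have "\<forall>u\<in>J. ?q \<bullet> u = 0"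
    proof
      fix u assume u: "u \<in> J"
      show "?q \<bullet> u = 0"
      proof (cases "u \<in> U")
        case True
        then have "u \<in> span (J \<inter> U)" using u by (intro span_base) blast
        then show ?thesis by (rule pp_orth)
      next
        case False
        then have uV: "u \<in> V" using u J by blast
        have "x \<bullet> u = 0" using UV x uV by blast
        moreover have "(x - ?q) \<bullet> u = 0" using span_orth[OF w] UV uV by blast
        ultimately show ?thesis by (simp add: inner_diff_left)
      qed
    qed
    then have "\<forall>u\<in>J. u \<bullet> ?q = 0" by (simp add: inner_commute)
    then have "z \<bullet> ?q = 0" by (rule span_orth[OF z])
    then show "?q \<bullet> z = 0" by (simp only: inner_commute)
  qed
  moreover have "x - (x - ?q) \<in> span U"
    using w span_mono[of "J \<inter> U" U] span_base[OF x] span_diff by blast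
  ultimately show ?thesis by simp
qed

lemma orth_pp:
  fixes x :: "'a::euclidean_space"
  assumes J: "J \<subseteq> U \<union> V" and x: "x \<in> U" and y: "y \<in> V" and UV: "\<forall>u\<in>U. \<forall>v\<in>V. u \<bullet> v = 0"
  shows "perp_proj J x \<bullet> perp_proj J y = 0"
proof -
  have px: "perp_proj J x \<in> span U" using orth_split[OF J x UV] .
  have VU: "\<forall>v\<in>V. \<forall>u\<in>U. v \<bullet> u = 0"
  proof (intro ballI)
    fix v u assume "v \<in> V" "u \<in> U"
    then have "u \<bullet> v = 0" using UV by blast
    then show "v \<bullet> u = 0" by (simp only: inner_commute)
  qed
  have py: "perp_proj J y \<in> span V" using orth_split[of J V U y] J y VU by blast
  have "\<forall>v\<in>V. v \<bullet> perp_proj J x = 0"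
  proof
    fix v assume v: "v \<in> V"
    have "perp_proj J x \<bullet> v = 0" using span_orth[OF px] UV v by blast
    then show "v \<bullet> perp_proj J x = 0" by (simp only: inner_commute)
  qed
  then have "perp_proj J y \<bullet> perp_proj J x = 0" by (rule span_orth[OF py])
  then show ?thesis by (simp only: inner_commute)
qed



lemma trancl_target:
  "(a, y) \<in> {(u, v). u \<in> \<Sigma> \<and> v \<in> \<Sigma> - A \<and> P u v}\<^sup>+ \<Longrightarrow> y \<in> \<Sigma> - A"
  by (induction rule: trancl_induct) auto

lemma Conn:
  assumes q: "qd \<Delta> \<Sigma> J R S" and A: "A \<subseteq> \<Sigma> - J" and Bs: "Bs \<subseteq> \<Sigma> - J" "A \<inter> Bs = {}"
    and a: "a \<in> A" and b: "b \<in> Bs" and conn: "qrs_connected R S"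
  shows "\<exists>a0\<in>A. \<exists>b0\<in>Bs. (a0, b0) \<in> {(u, v). u \<in> \<Sigma> \<and> v \<in> \<Sigma> - A \<and> u \<bullet> v < 0}\<^sup>+"
proof (rule ccontr)
  assume H: "\<not> ?thesis"
  note d = qdD[OF q]
  let ?E = "{(u, v). u \<in> \<Sigma> \<and> v \<in> \<Sigma> - A \<and> u \<bullet> v < 0}"
  let ?p = "perp_proj J"
  define U where "U = A \<union> {y. \<exists>a'\<in>A. (a', y) \<in> ?E\<^sup>+}"
  define V where "V = \<Sigma> - U"
  have U\<Sigma>: "U \<subseteq> \<Sigma>"
  proof
    fix y assume "y \<in> U"
    then consider "y \<in> A" | a' where "(a', y) \<in> ?E\<^sup>+" unfolding U_def by blast
    then show "y \<in> \<Sigma>"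
    proof cases
      case 1 then show ?thesis using A by blast
    next
      case 2
      have "y \<in> \<Sigma> - A" by (rule trancl_target[of a' y \<Sigma> A "\<lambda>u v. u \<bullet> v < 0"]) (use 2 in simp)
      then show ?thesis by blast
    qed
  qed
  have BV: "Bs \<subseteq> V"
  proof
    fix y assume y: "y \<in> Bs"
    have "y \<notin> A" using y Bs(2) by blast
    moreover have "\<not> (\<exists>a'\<in>A. (a', y) \<in> ?E\<^sup>+)" using H y by blast
    ultimately have "y \<notin> U" unfolding U_def by blast
    then show "y \<in> V" unfolding V_def using y Bs(1) by blast
  qed
  have orth: "\<forall>u\<in>U. \<forall>v\<in>V. u \<bullet> v = 0"
  proof (intro ballI)
    fix u v assume u: "u \<in> U" and v: "v \<in> V"
    have uv: "u \<noteq> v" "u \<in> \<Sigma>" "v \<in> \<Sigma>" using u v U\<Sigma> unfolding V_def by auto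
    have le: "u \<bullet> v \<le> 0" using F3[OF d(1,2) uv(2,3,1)] .
    show "u \<bullet> v = 0"
    proof (rule ccontr)
      assume "u \<bullet> v \<noteq> 0"
      then have lt: "u \<bullet> v < 0" using le by simp
      have vA: "v \<notin> A" using v unfolding V_def U_def by blast
      have e: "(u, v) \<in> ?E" using lt uv vA by blast
      have "v \<in> U"
      proof (cases "u \<in> A")
        case True
        have "(u, v) \<in> ?E\<^sup>+" using e by (rule r_into_trancl)
        then show ?thesis unfolding U_def using True by blast
      next
        case False
        then obtain a' where a': "a' \<in> A" "(a', u) \<in> ?E\<^sup>+" using u unfolding U_def by blast
        have "(a', v) \<in> ?E\<^sup>+" using a'(2) e by (rule trancl_into_trancl)
        then show ?thesis unfolding U_def using a'(1) by blast
      qed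
      then show False using v unfolding V_def by blast
    qed
  qed
  have JUV: "J \<subseteq> U \<union> V" using d(3) unfolding V_def by blast
  let ?G = "{(a, b). a \<in> S \<and> b \<in> S \<and> a \<bullet> b < 0}"
  have aS: "?p a \<in> S" "?p b \<in> S" using a b A Bs d(6) by blast+
  have "(?p a, ?p b) \<in> ?G\<^sup>*" using conn aS unfolding qrs_connected_def by blast
  then have "?p b \<in> ?p ` (U - J)"
  proof (induction rule: rtrancl_induct)
    case base then show ?case using a A unfolding U_def by blast
  next
    case (step y z)
    then obtain x where x: "x \<in> U - J" "y = ?p x" by blast
    have "z \<in> S" "y \<bullet> z < 0" using step(2) by auto
    then obtain w where w: "w \<in> \<Sigma> - J" "z = ?p w" using d(6) by blast
    show ?case
    proof (cases "w \<in> U")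
      case True then show ?thesis using w by blast
    next
      case False
      then have "w \<in> V" using w unfolding V_def by blast
      then have "?p x \<bullet> ?p w = 0" using orth_pp[OF JUV _ _ orth] x by blast
      then show ?thesis using \<open>y \<bullet> z < 0\<close> x w by simp
    qed
  qed
  then obtain u where u: "u \<in> U - J" "?p b = ?p u" by blast
  have "u \<in> \<Sigma> - J" using u U\<Sigma> by blast
  moreover have "b \<in> \<Sigma> - J" using b Bs by blast
  ultimately have "b = u" using d(11) u(2) inj_on_def by metis
  then show False using u BV b unfolding V_def by blast
qed

lemma Step2:
  assumes q: "qd \<Delta> \<Sigma> J R S" and K: "K \<subseteq> S" and I: "I \<subseteq> S" and IK: "I \<union> K = S"
    and nI: "I \<noteq> S" and nK: "K \<noteq> S" and conn: "qrs_connected R S"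
    and HI: "\<And>\<alpha> \<beta>. \<alpha> \<in> pos_roots R S \<Longrightarrow> \<beta> \<in> pos_roots R S \<Longrightarrow> \<alpha> \<notin> span I \<Longrightarrow> \<alpha> - \<beta> \<in> span I \<Longrightarrow> P \<alpha> = P \<beta>"
    and HK: "\<And>\<alpha> \<beta>. \<alpha> \<in> pos_roots R S \<Longrightarrow> \<beta> \<in> pos_roots R S \<Longrightarrow> \<alpha> \<notin> span K \<Longrightarrow> \<alpha> - \<beta> \<in> span K \<Longrightarrow> P \<alpha> = P \<beta>"
  shows "\<exists>s0\<in>S-I. \<forall>\<alpha>\<in>pos_roots R S. \<forall>\<beta>\<in>pos_roots R S.
           cf S \<alpha> s0 \<noteq> 0 \<longrightarrow> cf S \<beta> s0 \<noteq> 0 \<longrightarrow> P \<alpha> = P \<beta>"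
proof -
  note d = qdD[OF q]
  let ?p = "perp_proj J"
  define A where "A = {\<sigma>\<in>\<Sigma>-J. ?p \<sigma> \<notin> I}"
  define Bs where "Bs = {\<sigma>\<in>\<Sigma>-J. ?p \<sigma> \<notin> K}"
  have AB: "A \<subseteq> \<Sigma> - J" "Bs \<subseteq> \<Sigma> - J" "A \<inter> Bs = {}"
    unfolding A_def Bs_def using IK d(6) by auto
  obtain a where a: "a \<in> A" using nI I d(6) unfolding A_def by blast
  obtain b where b: "b \<in> Bs" using nK K d(6) unfolding Bs_def by blast
  obtain a0 b0 where ab: "a0 \<in> A" "b0 \<in> Bs" "(a0, b0) \<in> {(u, v). u \<in> \<Sigma> \<and> v \<in> \<Sigma> - A \<and> u \<bullet> v < 0}\<^sup>+"
    using Conn[OF q AB a b conn] by blast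
  have a0\<Sigma>: "a0 \<in> \<Sigma>" "b0 \<in> \<Sigma>" using ab AB by auto
  let ?g = "\<lambda>\<gamma>. P (?p \<gamma>)"
  have notin: "?p \<gamma> \<in> pos_roots R S \<and> ?p \<gamma> \<notin> span T"
    if "posr \<Delta> \<Sigma> \<gamma>" "c \<in> \<Sigma> - J" "?p c \<notin> T" "cf \<Sigma> \<gamma> c > 0" "T \<subseteq> S" for \<gamma> c T
  proof -
    have sg: "\<gamma> \<in> span \<Sigma>" using posr_span[OF d(2) that(1)] .
    have n: "?p \<gamma> \<notin> span T" using qd_span_iff[OF q sg that(5)] that(2-4) by force
    then have "?p \<gamma> \<noteq> 0" using span_zero by force
    then show ?thesis using n qd_pos[OF q that(1)] by blast
  qed
  have H1: "?g \<gamma> = ?g (\<gamma> + \<sigma>)"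
    if h: "posr \<Delta> \<Sigma> \<gamma>" "posr \<Delta> \<Sigma> (\<gamma> + \<sigma>)" "\<sigma> \<in> \<Sigma> - A" "cf \<Sigma> \<gamma> a0 > 0" for \<gamma> \<sigma>
  proof (cases "\<sigma> \<in> J")
    case True then show ?thesis using qd_pp_plus[OF q] by simp
  next
    case False
    have gD: "\<gamma> \<in> \<Delta>" using h(1) unfolding posr_def by blast
    have s: "\<sigma> \<in> \<Sigma>" using h(3) by blast
    have sI: "?p \<sigma> \<in> I" using h(3) False unfolding A_def by blast
    have a0A: "a0 \<in> \<Sigma> - J" "?p a0 \<notin> I" using ab(1) unfolding A_def by auto
    have c2: "cf \<Sigma> (\<gamma> + \<sigma>) a0 > 0" using cf_plus_base[OF d(2) gD s a0\<Sigma>(1)] h(4) by (cases "a0 = \<sigma>") auto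
    note n1 = notin[OF h(1) a0A h(4) I] and n2 = notin[OF h(2) a0A c2 I]
    have "?p (\<gamma> + \<sigma>) - ?p \<gamma> \<in> span I" using sI span_base by (simp add: pp_add)
    then show ?thesis using HI[of "?p (\<gamma> + \<sigma>)" "?p \<gamma>"] n1 n2 by simp
  qed
  have H2: "?g \<gamma> = ?g (\<gamma> + \<sigma>)"
    if h: "posr \<Delta> \<Sigma> \<gamma>" "posr \<Delta> \<Sigma> (\<gamma> + \<sigma>)" "\<sigma> \<in> A" "cf \<Sigma> \<gamma> a0 > 0" "cf \<Sigma> \<gamma> b0 > 0" for \<gamma> \<sigma>
  proof -
    have gD: "\<gamma> \<in> \<Delta>" using h(1) unfolding posr_def by blast
    have s: "\<sigma> \<in> \<Sigma>" "?p \<sigma> \<notin> I" "\<sigma> \<in> \<Sigma> - J" using h(3) unfolding A_def by auto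
    have "?p \<sigma> \<in> S" using s(3) d(6) by blast
    then have sK: "?p \<sigma> \<in> K" using s(2) IK by blast
    have b0B: "b0 \<in> \<Sigma> - J" "?p b0 \<notin> K" using ab(2) unfolding Bs_def by auto
    have c2: "cf \<Sigma> (\<gamma> + \<sigma>) b0 > 0" using cf_plus_base[OF d(2) gD s(1) a0\<Sigma>(2)] h(5) by (cases "b0 = \<sigma>") auto
    note n1 = notin[OF h(1) b0B h(5) K] and n2 = notin[OF h(2) b0B c2 K]
    have "?p (\<gamma> + \<sigma>) - ?p \<gamma> \<in> span K" using sK span_base by (simp add: pp_add)
    then show ?thesis using HK[of "?p (\<gamma> + \<sigma>)" "?p \<gamma>"] n1 n2 by simp
  qed
  have core: "?g x = ?g y" if "posr \<Delta> \<Sigma> x" "posr \<Delta> \<Sigma> y" "cf \<Sigma> x a0 > 0" "cf \<Sigma> y a0 > 0" for x y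
    by (rule Core2[where A=A and b=b0, OF d(1,2) a0\<Sigma>(1) a0\<Sigma>(2) ab(3)]) (use H1 H2 that in auto)
  have s0: "?p a0 \<in> S - I" using ab(1) d(6) unfolding A_def by blast
  have "\<forall>\<alpha>\<in>pos_roots R S. \<forall>\<beta>\<in>pos_roots R S. cf S \<alpha> (?p a0) \<noteq> 0 \<longrightarrow> cf S \<beta> (?p a0) \<noteq> 0 \<longrightarrow> P \<alpha> = P \<beta>"
  proof (intro ballI impI)
    fix \<alpha> \<beta> assume ab': "\<alpha> \<in> pos_roots R S" "\<beta> \<in> pos_roots R S" "cf S \<alpha> (?p a0) \<noteq> 0" "cf S \<beta> (?p a0) \<noteq> 0"
    obtain x where x: "posr \<Delta> \<Sigma> x" "?p x = \<alpha>" using qd_lift[OF q ab'(1)] by blast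
    obtain y where y: "posr \<Delta> \<Sigma> y" "?p y = \<beta>" using qd_lift[OF q ab'(2)] by blast
    have a0J: "a0 \<in> \<Sigma> - J" using ab(1) unfolding A_def by blast
    have "cf \<Sigma> x a0 \<noteq> 0" using qd_cf[OF q posr_span[OF d(2) x(1)] a0J] x(2) ab'(3) by simp
    then have cx: "cf \<Sigma> x a0 > 0" using x(1) a0\<Sigma>(1) unfolding posr_def by force
    have "cf \<Sigma> y a0 \<noteq> 0" using qd_cf[OF q posr_span[OF d(2) y(1)] a0J] y(2) ab'(4) by simp
    then have cy: "cf \<Sigma> y a0 > 0" using y(1) a0\<Sigma>(1) unfolding posr_def by force
    show "P \<alpha> = P \<beta>" using core[OF x(1) y(1) cx cy] x(2) y(2) by simp
  qed
  then show ?thesis using s0 by blast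
qed



lemma good_sub:
  assumes g: "good R S" and I: "I \<subseteq> S"
  shows "good (sub_qrs R I) I"
proof -
  note gd = goodD[OF g]
  have "\<exists>c. \<alpha> = int_comb I c \<and> ((\<forall>s\<in>I. c s \<ge> 0) \<or> (\<forall>s\<in>I. c s \<le> 0))" if a: "\<alpha> \<in> sub_qrs R I" for \<alpha>
  proof -
    have aR: "\<alpha> \<in> R" "\<alpha> \<in> span I" using a unfolding sub_qrs_def by auto
    obtain c where c: "\<alpha> = int_comb S c" "(\<forall>s\<in>S. c s \<ge> 0) \<or> (\<forall>s\<in>S. c s \<le> 0)" using gd(4)[OF aR(1)] by blast
    have "\<forall>s\<in>S-I. real_of_int (c s) = 0"
      using aR(2) L_span[OF gd(1,2) I, of "\<lambda>s. real_of_int (c s)"] c(1) by (simp add: int_comb_real)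
    then have "\<alpha> = (\<Sum>s\<in>I. real_of_int (c s) *\<^sub>R s)"
      unfolding c(1) int_comb_real using gd(1) I by (intro sum.mono_neutral_right) auto
    then have "\<alpha> = int_comb I c" by (simp add: int_comb_real)
    then show ?thesis using c(2) I by blast
  qed
  moreover have "finite I" "independent I" using gd(1,2) I finite_subset independent_mono by blast+
  moreover have "0 \<notin> sub_qrs R I" using gd(3) unfolding sub_qrs_def by auto
  ultimately show ?thesis unfolding good_def by blast
qed

lemma good_quot:
  assumes g: "good R S" and K: "K \<subseteq> S"
  shows "good (quot_qrs R K) (quot_base S K)"
proof -
  note gd = goodD[OF g]
  have "\<exists>c. \<beta> = int_comb (quot_base S K) c \<and> ((\<forall>s\<in>quot_base S K. c s \<ge> 0) \<or> (\<forall>s\<in>quot_base S K. c s \<le> 0))"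
    if b: "\<beta> \<in> quot_qrs R K" for \<beta>
  proof -
    obtain \<alpha> where a: "\<alpha> \<in> R" "\<beta> = perp_proj K \<alpha>" using b unfolding quot_qrs_def by blast
    obtain c where c: "\<alpha> = int_comb S c" "(\<forall>s\<in>S. c s \<ge> 0) \<or> (\<forall>s\<in>S. c s \<le> 0)" using gd(4)[OF a(1)] by blast
    let ?c = "\<lambda>t. c (inv_into (S - K) (perp_proj K) t)"
    have "\<beta> = (\<Sum>t\<in>quot_base S K. real_of_int (?c t) *\<^sub>R t)"
      unfolding a(2) c(1) int_comb_real quot_base_def by (rule pp_comb[OF gd(1,2) K])
    then have "\<beta> = int_comb (quot_base S K) ?c" by (simp add: int_comb_real)
    moreover have "(\<forall>s\<in>quot_base S K. ?c s \<ge> 0) \<or> (\<forall>s\<in>quot_base S K. ?c s \<le> 0)"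
      using c(2) pp_inj[OF gd(1,2) K] unfolding quot_base_def by (auto simp: inv_into_f_f)
    ultimately show ?thesis by blast
  qed
  moreover have "finite (quot_base S K)" using gd(1) unfolding quot_base_def by simp
  moreover have "independent (quot_base S K)" using quot_base_indep[OF gd(1,2) K] .
  moreover have "0 \<notin> quot_qrs R K" unfolding quot_qrs_def by auto
  ultimately show ?thesis unfolding good_def by blast
qed

lemma good_span_iff:
  assumes g: "good R S" and a: "\<alpha> \<in> span S" and T: "T \<subseteq> S"
  shows "\<alpha> \<in> span T \<longleftrightarrow> (\<forall>s\<in>S-T. cf S \<alpha> s = 0)"
proof -
  note gd = goodD[OF g]
  have "\<alpha> = (\<Sum>s\<in>S. cf S \<alpha> s *\<^sub>R s)" using cf_span[OF gd(1) a] .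
  then show ?thesis using L_span[OF gd(1,2) T, of "cf S \<alpha>"] by simp
qed

lemma PrimTrans:
  assumes g: "good R S" and I: "I \<subseteq> S"
    and PsiQ: "\<Psi> \<subseteq> pos_roots (quot_qrs R I) (quot_base S I)"
    and prim: "primitive (quot_qrs R I) (quot_base S I) \<Psi>"
    and M: "M \<subseteq> S - I"
    and C: "\<And>\<alpha> \<beta>. \<alpha> \<in> pos_roots R S \<Longrightarrow> \<beta> \<in> pos_roots R S \<Longrightarrow> \<alpha> \<notin> span (I \<union> M) \<Longrightarrow>
              \<alpha> - \<beta> \<in> span (I \<union> M) \<Longrightarrow> (perp_proj I \<alpha> \<in> \<Psi> \<longleftrightarrow> perp_proj I \<beta> \<in> \<Psi>)"
  shows "M = {} \<or> M = S - I"
proof -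
  note gd = goodD[OF g]
  let ?p = "perp_proj I"
  let ?K = "?p ` M"
  have gq: "good (quot_qrs R I) (quot_base S I)" using good_quot[OF g I] .
  have Kb: "?K \<subseteq> quot_base S I" using M unfolding quot_base_def by blast
  have "?K \<in> Gen (quot_qrs R I) (quot_base S I) \<Psi>"
    unfolding GenChar[OF gq PsiQ Kb]
  proof (intro ballI impI)
    fix \<beta> \<beta>' assume b: "\<beta> \<in> pos_roots (quot_qrs R I) (quot_base S I)" "\<beta>' \<in> pos_roots (quot_qrs R I) (quot_base S I)"
      "\<beta> \<notin> span ?K" "\<beta> - \<beta>' \<in> span ?K"
    obtain \<alpha> where a: "\<alpha> \<in> pos_roots R S" "\<beta> = ?p \<alpha>" using quot_lift[OF g I b(1)] by blast
    obtain \<alpha>' where a': "\<alpha>' \<in> pos_roots R S" "\<beta>' = ?p \<alpha>'" using quot_lift[OF g I b(2)] by blast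
    have n: "\<alpha> \<notin> span (I \<union> M)" using b(3) a(2) span_pp_image by blast
    have "?p (\<alpha> - \<alpha>') \<in> span ?K" using b(4) a(2) a'(2) by (simp add: pp_diff)
    then have "\<alpha> - \<alpha>' \<in> span (I \<union> M)" using span_pp_image by blast
    then show "\<beta> \<in> \<Psi> \<longleftrightarrow> \<beta>' \<in> \<Psi>" using C[OF a(1) a'(1) n] a(2) a'(2) by simp
  qed
  then obtain \<Theta> Y where "infl_args (quot_qrs R I) (quot_base S I) ?K \<Theta> Y"
    "\<Psi> = infl (quot_qrs R I) (quot_base S I) ?K \<Theta> Y" unfolding Gen_def by blast
  then have "?K = {} \<or> ?K = quot_base S I" using prim unfolding primitive_def by blast
  then show ?thesis
  proof
    assume "?K = {}" then show ?thesis by simp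
  next
    assume e: "?K = quot_base S I"
    have "S - I \<subseteq> M"
    proof
      fix s assume s: "s \<in> S - I"
      then have "?p s \<in> ?K" using e unfolding quot_base_def by blast
      then obtain m where m: "m \<in> M" "?p s = ?p m" by blast
      have "m \<in> S - I" using m M by blast
      then have "s = m" using pp_inj[OF gd(1,2) I] s m(2) inj_on_def by metis
      then show "s \<in> M" using m by simp
    qed
    then show ?thesis using M by blast
  qed
qed

lemma PsiTriv:
  assumes g: "good R S" and I: "I \<subseteq> S"
    and PsiQ: "\<Psi> \<subseteq> pos_roots (quot_qrs R I) (quot_base S I)"
    and memb: "\<And>\<alpha>. \<alpha> \<in> pos_roots R S \<Longrightarrow> \<alpha> \<notin> span I \<Longrightarrow> (\<alpha> \<in> \<Phi> \<longleftrightarrow> perp_proj I \<alpha> \<in> \<Psi>)"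
    and const: "\<And>\<alpha> \<beta>. \<alpha> \<in> pos_roots R S \<Longrightarrow> \<beta> \<in> pos_roots R S \<Longrightarrow> \<alpha> \<notin> span I \<Longrightarrow> \<beta> \<notin> span I
                  \<Longrightarrow> (\<alpha> \<in> \<Phi> \<longleftrightarrow> \<beta> \<in> \<Phi>)"
  shows "\<Psi> = {} \<or> \<Psi> = pos_roots (quot_qrs R I) (quot_base S I)"
proof (cases "\<Psi> = {}")
  case True then show ?thesis by simp
next
  case False
  then obtain b0 where b0: "b0 \<in> \<Psi>" by blast
  obtain a0 where a0: "a0 \<in> pos_roots R S" "a0 \<notin> span I" "b0 = perp_proj I a0"
    using quot_lift[OF g I] b0 PsiQ by blast
  have a0P: "a0 \<in> \<Phi>" using memb[OF a0(1,2)] a0(3) b0 by simp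
  have "pos_roots (quot_qrs R I) (quot_base S I) \<subseteq> \<Psi>"
  proof
    fix b assume b: "b \<in> pos_roots (quot_qrs R I) (quot_base S I)"
    obtain a where a: "a \<in> pos_roots R S" "a \<notin> span I" "b = perp_proj I a"
      using quot_lift[OF g I b] by blast
    have "a \<in> \<Phi>" using const[OF a0(1) a(1) a0(2) a(2)] a0P by simp
    then show "b \<in> \<Psi>" using memb[OF a(1,2)] a(3) by simp
  qed
  then show ?thesis using PsiQ by blast
qed

theorem proposition3p19:
  fixes R S \<Phi> I \<Psi> X :: "'a::euclidean_space set"
  assumes "qrs R S"
    and "qrs_connected R S"
    and "\<Phi> \<subseteq> pos_roots R S"
    and "canonical_form R S \<Phi> I \<Psi> X"
    and "primitive (quot_qrs R I) (quot_base S I) \<Psi>"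
  shows "Gen R S \<Phi> = Gen (sub_qrs R I) I X \<union> {S}"
proof -
  obtain \<Delta> \<Sigma> J where q: "qd \<Delta> \<Sigma> J R S" using qrs_qd[OF assms(1)] by blast
  have g: "good R S" using qd_good[OF q] .
  note gd = goodD[OF g]
  note conn = assms(2) and PhiP = assms(3) and prim = assms(5)
  have IS: "I \<subset> S" and args: "infl_args R S I \<Psi> X" and eq: "\<Phi> = infl R S I \<Psi> X"
    using assms(4) unfolding canonical_form_def by auto
  have I: "I \<subseteq> S" using IS by blast
  have PsiQ: "\<Psi> \<subseteq> pos_roots (quot_qrs R I) (quot_base S I)" and XI: "X \<subseteq> pos_roots (sub_qrs R I) I"
    using args unfolding infl_args_def by auto
  have Xspan: "X \<subseteq> span I" using XI sub_pos_span by blast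
  have Psi0: "0 \<notin> \<Psi>" using PsiQ unfolding pos_roots_def quot_qrs_def by blast
  have memb: "\<alpha> \<in> \<Phi> \<longleftrightarrow> perp_proj I \<alpha> \<in> \<Psi>" if "\<alpha> \<in> pos_roots R S" "\<alpha> \<notin> span I" for \<alpha>
    using that Xspan unfolding eq infl_def by blast
  have XPhi: "X = \<Phi> \<inter> span I"
  proof
    show "X \<subseteq> \<Phi> \<inter> span I" using Xspan unfolding eq infl_def by blast
  next
    show "\<Phi> \<inter> span I \<subseteq> X"
    proof
      fix \<alpha> assume a: "\<alpha> \<in> \<Phi> \<inter> span I"
      then have "perp_proj I \<alpha> = 0" using pp_span_zero by blast
      then show "\<alpha> \<in> X" using a Psi0 unfolding eq infl_def by auto
    qed
  qed
  have IGen: "I \<in> Gen R S \<Phi>" unfolding Gen_def using I args eq by blast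
  have HI: "\<alpha> \<in> \<Phi> \<longleftrightarrow> \<beta> \<in> \<Phi>"
    if "\<alpha> \<in> pos_roots R S" "\<beta> \<in> pos_roots R S" "\<alpha> \<notin> span I" "\<alpha> - \<beta> \<in> span I" for \<alpha> \<beta>
    using IGen that unfolding GenChar[OF g PhiP I] by blast
  have key: "K \<subseteq> I" if K: "K \<in> Gen R S \<Phi>" "K \<noteq> S" for K
  proof (rule ccontr)
    assume nKI: "\<not> K \<subseteq> I"
    have KS: "K \<subseteq> S" using K(1) unfolding Gen_def by blast
    have HK: "\<alpha> \<in> \<Phi> \<longleftrightarrow> \<beta> \<in> \<Phi>"
      if "\<alpha> \<in> pos_roots R S" "\<beta> \<in> pos_roots R S" "\<alpha> \<notin> span K" "\<alpha> - \<beta> \<in> span K" for \<alpha> \<beta>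
      using K(1) that unfolding GenChar[OF g PhiP KS] by blast
    define M where "M = K - I"
    have M: "M \<subseteq> S - I" "I \<union> M = I \<union> K" unfolding M_def using KS by auto
    have CM: "perp_proj I \<alpha> \<in> \<Psi> \<longleftrightarrow> perp_proj I \<beta> \<in> \<Psi>"
      if a: "\<alpha> \<in> pos_roots R S" "\<beta> \<in> pos_roots R S" "\<alpha> \<notin> span (I \<union> M)" "\<alpha> - \<beta> \<in> span (I \<union> M)" for \<alpha> \<beta>
    proof -
      have a3: "\<alpha> \<notin> span (I \<union> K)" "\<alpha> - \<beta> \<in> span (I \<union> K)" using a(3,4) M(2) by auto
      have "\<alpha> \<in> \<Phi> \<longleftrightarrow> \<beta> \<in> \<Phi>"
        by (rule Step1[where P="\<lambda>x. x \<in> \<Phi>", OF q KS I _ _ a(1,2) a3]) (use HI HK in blast)+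
      moreover have "\<alpha> \<notin> span I" using a3(1) span_mono[of I "I \<union> K"] by blast
      moreover have "\<beta> \<notin> span I"
      proof
        assume "\<beta> \<in> span I"
        then have "\<beta> \<in> span (I \<union> K)" using span_mono[of I "I \<union> K"] by blast
        then have "(\<alpha> - \<beta>) + \<beta> \<in> span (I \<union> K)" using a3(2) span_add by blast
        then show False using a3(1) by simp
      qed
      ultimately show ?thesis using memb a(1,2) by blast
    qed
    have "M = {} \<or> M = S - I" by (rule PrimTrans[OF g I PsiQ prim M(1)]) (use CM in blast)
    moreover have "M \<noteq> {}" using nKI unfolding M_def by blast
    ultimately have "M = S - I" by blast
    then have IK: "I \<union> K = S" using M(2) I KS by blast
    obtain s0 where s0: "s0 \<in> S - I"
      and c0: "\<forall>\<alpha>\<in>pos_roots R S. \<forall>\<beta>\<in>pos_roots R S. cf S \<alpha> s0 \<noteq> 0 \<longrightarrow> cf S \<beta> s0 \<noteq> 0 \<longrightarrow> (\<alpha> \<in> \<Phi>) = (\<beta> \<in> \<Phi>)"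
      using Step2[where P="\<lambda>x. x \<in> \<Phi>", OF q KS I IK _ K(2) conn] IS HI HK by blast
    define M' where "M' = S - I - {s0}"
    have M': "M' \<subseteq> S - I" "I \<union> M' = S - {s0}" "I \<union> M' \<subseteq> S" unfolding M'_def using s0 I by auto
    have spS: "\<alpha> \<in> span S" if "\<alpha> \<in> pos_roots R S" for \<alpha> using good_span[OF g] that pos_roots_sub by blast
    have cfne: "cf S \<alpha> s0 \<noteq> 0" if "\<alpha> \<in> pos_roots R S" "\<alpha> \<notin> span (I \<union> M')" for \<alpha>
      using good_span_iff[OF g spS[OF that(1)] M'(3)] that(2) M'(2) s0 by auto
    have CM': "perp_proj I \<alpha> \<in> \<Psi> \<longleftrightarrow> perp_proj I \<beta> \<in> \<Psi>"
      if a: "\<alpha> \<in> pos_roots R S" "\<beta> \<in> pos_roots R S" "\<alpha> \<notin> span (I \<union> M')" "\<alpha> - \<beta> \<in> span (I \<union> M')" for \<alpha> \<beta>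
    proof -
      have ca: "cf S \<alpha> s0 \<noteq> 0" using cfne a(1,3) by blast
      have sab: "\<alpha> - \<beta> \<in> span S" using spS a(1,2) span_diff by blast
      have "cf S (\<alpha> - \<beta>) s0 = 0"
        using good_span_iff[OF g sab M'(3)] a(4) M'(2) s0 by auto
      then have "cf S \<beta> s0 = cf S \<alpha> s0"
        using cf_diff[OF gd(1,2) spS[OF a(1)] spS[OF a(2)]] s0 by auto
      then have cb: "cf S \<beta> s0 \<noteq> 0" using ca by simp
      have "\<alpha> \<in> \<Phi> \<longleftrightarrow> \<beta> \<in> \<Phi>" using c0 a(1,2) ca cb by blast
      moreover have "\<alpha> \<notin> span I" using a(3) span_mono[of I "I \<union> M'"] by blast
      moreover have "\<beta> \<notin> span I"
      proof
        assume "\<beta> \<in> span I"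
        then have "\<beta> \<in> span (I \<union> M')" using span_mono[of I "I \<union> M'"] by blast
        then have "(\<alpha> - \<beta>) + \<beta> \<in> span (I \<union> M')" using a(4) span_add by blast
        then show False using a(3) by simp
      qed
      ultimately show ?thesis using memb a(1,2) by blast
    qed
    have "M' = {} \<or> M' = S - I" by (rule PrimTrans[OF g I PsiQ prim M'(1)]) (use CM' in blast)
    moreover have "M' \<noteq> S - I" using s0 unfolding M'_def by blast
    ultimately have M'0: "M' = {}" by blast
    have const: "\<alpha> \<in> \<Phi> \<longleftrightarrow> \<beta> \<in> \<Phi>"
      if a: "\<alpha> \<in> pos_roots R S" "\<beta> \<in> pos_roots R S" "\<alpha> \<notin> span I" "\<beta> \<notin> span I" for \<alpha> \<beta>
    proof -
      have "cf S \<alpha> s0 \<noteq> 0" "cf S \<beta> s0 \<noteq> 0" using cfne a M'0 by auto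
      then show ?thesis using c0 a(1,2) by blast
    qed
    have "\<Psi> = {} \<or> \<Psi> = pos_roots (quot_qrs R I) (quot_base S I)"
      by (rule PsiTriv[OF g I PsiQ]) (use memb const in blast)+
    then show False using prim unfolding primitive_def by blast
  qed
  show ?thesis
  proof
    show "Gen R S \<Phi> \<subseteq> Gen (sub_qrs R I) I X \<union> {S}"
    proof
      fix K assume K: "K \<in> Gen R S \<Phi>"
      show "K \<in> Gen (sub_qrs R I) I X \<union> {S}"
      proof (cases "K = S")
        case True then show ?thesis by simp
      next
        case False
        have KI: "K \<subseteq> I" using key[OF K False] .
        have KS: "K \<subseteq> S" using KI I by blast
        have gs: "good (sub_qrs R I) I" using good_sub[OF g I] .
        have "K \<in> Gen (sub_qrs R I) I X"
          unfolding GenChar[OF gs XI KI]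
        proof (intro ballI impI)
          fix \<alpha> \<beta> assume a: "\<alpha> \<in> pos_roots (sub_qrs R I) I" "\<beta> \<in> pos_roots (sub_qrs R I) I"
            "\<alpha> \<notin> span K" "\<alpha> - \<beta> \<in> span K"
          have p: "\<alpha> \<in> pos_roots R S" "\<beta> \<in> pos_roots R S" using sub_pos_pos[OF g I] a(1,2) by auto
          have s: "\<alpha> \<in> span I" "\<beta> \<in> span I" using sub_pos_span a(1,2) by auto
          have "\<alpha> \<in> \<Phi> \<longleftrightarrow> \<beta> \<in> \<Phi>" using K p a(3,4) unfolding GenChar[OF g PhiP KS] by blast
          then show "\<alpha> \<in> X \<longleftrightarrow> \<beta> \<in> X" unfolding XPhi using s by blast
        qed
        then show ?thesis by simp
      qed
    qed
  next
    show "Gen (sub_qrs R I) I X \<union> {S} \<subseteq> Gen R S \<Phi>"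
    proof
      fix K assume K: "K \<in> Gen (sub_qrs R I) I X \<union> {S}"
      then consider "K = S" | "K \<in> Gen (sub_qrs R I) I X" by blast
      then show "K \<in> Gen R S \<Phi>"
      proof cases
        case 1
        have "S \<in> Gen R S \<Phi>"
          unfolding GenChar[OF g PhiP order_refl]
          using good_span[OF g] pos_roots_sub by blast
        then show ?thesis using 1 by simp
      next
        case 2
        have KI: "K \<subseteq> I" using 2 unfolding Gen_def by blast
        have KS: "K \<subseteq> S" using KI I by blast
        have gs: "good (sub_qrs R I) I" using good_sub[OF g I] .
        have HX: "\<alpha> \<in> X \<longleftrightarrow> \<beta> \<in> X"
          if "\<alpha> \<in> pos_roots (sub_qrs R I) I" "\<beta> \<in> pos_roots (sub_qrs R I) I" "\<alpha> \<notin> span K" "\<alpha> - \<beta> \<in> span K"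
          for \<alpha> \<beta>
          using 2 that unfolding GenChar[OF gs XI KI] by blast
        have spKI: "span K \<subseteq> span I" using span_mono[OF KI] .
        show ?thesis
          unfolding GenChar[OF g PhiP KS]
        proof (intro ballI impI)
          fix \<alpha> \<beta> assume a: "\<alpha> \<in> pos_roots R S" "\<beta> \<in> pos_roots R S" "\<alpha> \<notin> span K" "\<alpha> - \<beta> \<in> span K"
          have dI: "\<alpha> - \<beta> \<in> span I" using a(4) spKI by blast
          show "\<alpha> \<in> \<Phi> \<longleftrightarrow> \<beta> \<in> \<Phi>"
          proof (cases "\<alpha> \<in> span I")
            case True
            have "\<alpha> - (\<alpha> - \<beta>) \<in> span I" using True dI span_diff by blast
            then have bI: "\<beta> \<in> span I" by simp
            have "\<alpha> \<in> pos_roots (sub_qrs R I) I" "\<beta> \<in> pos_roots (sub_qrs R I) I"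
              using sub_pos[OF g I] a(1,2) True bI by auto
            then have "\<alpha> \<in> X \<longleftrightarrow> \<beta> \<in> X" using HX a(3,4) by blast
            then show ?thesis unfolding XPhi using True bI by blast
          next
            case False
            then show ?thesis using HI a(1,2) dI by blast
          qed
        qed
      qed
    qed
  qed
qed


end
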